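(* Let Assumptions (A) hold, $\ell>0$, $x_0\in\mathcal H^s_\cap$. Then for every fixed $T>0$, $$\mathbb E_{x_0}\int_0^T\big|A_\ell(\bar S^{(N)}(v))-A_\ell(S^{(N)}(v))\big|^2\,dv\longrightarrow0\quad\text{as }N\to\infty.$$
   Context: $\mathcal H$, $\mathcal C$, $\phi_j$, $\lambda_j^2$, $x^j=\langle x,\phi_j\rangle$, $\mathcal H^r$ (norm $\|x\|_r^2=\sum_jj^{2r}(x^j)^2$) as usual. Assumptions (A): (1) $\lambda_j\asymp j^{-\kappa}$, $\kappa>1/2$; (2) $\Psi:\mathcal H^s\to\mathbb R$ defined everywhere, $s\in[0,\kappa-1/2)$; (3) $0\le\Psi(x)\lesssim1+\|x\|_s^2$; (4) $\|\nabla\Psi(x)\|_{-s}\lesssim1+\|x\|_s$, $\|\partial^2\Psi(x)\|_{\mathcal L(\mathcal H^s,\mathcal H^{-s})}\lesssim1$. With $\Phi$ the standard normal cdf: for $x>0$, $D_\ell(x)=2\ell^2e^{\ell^2(x-1)}\Phi(\ell(1-2x)/\sqrt{2x})$, $\Gamma_\ell(x)=D_\ell(x)+2\ell^2\Phi(-\ell/\sqrt{2x})$, $A_\ell(x)=-2xD_\ell(x)+\Gamma_\ell(x)$; at $0$ all equal $2\ell^2e^{-\ell^2}$. RWM chain started at $x_0$: given $x_k$, $\xi^N_{k+1}=\sum_{i\le N}\xi^{i,N}_{k+1}\phi_i$ (i.i.d. $\mathcal N(0,1)$), $y_{k+1}=x_k+\sqrt{2\ell^2/N}\mathcal C^{1/2}\xi^N_{k+1}$,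 $Q_k=\frac12\sum_{i\le N}|x^i_k|^2/\lambda_i^2-\frac12\sum_{i\le N}|y^i_{k+1}|^2/\lambda_i^2+\Psi(x^N_k)-\Psi(y^N_{k+1})$, $\gamma_{k+1}\sim$ Bernoulli$(1\wedge e^{Q_k})$, $x_{k+1}=x_k+\gamma_{k+1}\sqrt{2\ell^2/N}\mathcal C^{1/2}\xi^N_{k+1}$. $S^N_k=\frac1N\sum_{i\le N}|x^i_k|^2/\lambda_i^2$; for $k/N\le t<(k+1)/N$: $\bar S^{(N)}(t)=S^N_k$, $S^{(N)}(t)=(Nt-k)S^N_{k+1}+(k+1-Nt)S^N_k$. $\mathbb E_{x_0}$: expectation for the chain from $x_0$. $\mathcal H^s_\cap=\{x\in\mathcal H^s:\lim_N\frac1N\sum_{i\le N}|x^i|^2/\lambda_i^2\text{ exists and is finite}\}$. *)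

theory Defs
  imports "HOL-Probability.Probability"
begin

text \<open>Coordinates: a point x of H is represented by its coordinate sequence
  x :: nat => real, where x j is the coefficient along phi_(j+1) (0-based shift).\<close>

definition Hs_sq :: "real \<Rightarrow> (nat \<Rightarrow> real) \<Rightarrow> real" where
  "Hs_sq r x = (\<Sum>j. (real (Suc j)) powr (2 * r) * (x j)\<^sup>2)"

definition in_Hs :: "real \<Rightarrow> (nat \<Rightarrow> real) \<Rightarrow> bool" where
  "in_Hs r x \<longleftrightarrow> summable (\<lambda>j. (real (Suc j)) powr (2 * r) * (x j)\<^sup>2)"

definition Hs_norm :: "real \<Rightarrow> (nat \<Rightarrow> real) \<Rightarrow> real" where
  "Hs_norm r x = sqrt (Hs_sq r x)"

definition in_Hs_cap :: "real \<Rightarrow> (nat \<Rightarrow> real) \<Rightarrow> (nat \<Rightarrow> real) \<Rightarrow> bool" where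
  "in_Hs_cap s lam x \<longleftrightarrow> in_Hs s x \<and>
     convergent (\<lambda>N. (1 / real N) * (\<Sum>i<N. (x i)\<^sup>2 / (lam i)\<^sup>2))"

definition proj :: "nat \<Rightarrow> (nat \<Rightarrow> real) \<Rightarrow> (nat \<Rightarrow> real)" where
  "proj N x = (\<lambda>i. if i < N then x i else 0)"

definition Hs_linear :: "real \<Rightarrow> ((nat \<Rightarrow> real) \<Rightarrow> real) \<Rightarrow> bool" where
  "Hs_linear s L \<longleftrightarrow> (\<forall>h k a b. in_Hs s h \<longrightarrow> in_Hs s k \<longrightarrow>
       L (\<lambda>i. a * h i + b * k i) = a * L h + b * L k)"

text \<open>Psi is twice Frechet differentiable on H^s, with first derivative DPsi x
  (a bounded linear functional on H^s, i.e. the gradient in H^{-s}) and second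
  derivative D2Psi x (a bounded bilinear form on H^s, i.e. an element of
  L(H^s, H^{-s})), with the growth bounds of Assumption (A)(4) with constant K.\<close>
definition A4 :: "real \<Rightarrow> ((nat \<Rightarrow> real) \<Rightarrow> real) \<Rightarrow> real \<Rightarrow> bool" where
  "A4 s Psi K \<longleftrightarrow> (\<exists>DPsi D2Psi.
     (\<forall>x. in_Hs s x \<longrightarrow>
        Hs_linear s (DPsi x) \<and>
        (\<forall>h. in_Hs s h \<longrightarrow> \<bar>DPsi x h\<bar> \<le> K * (1 + Hs_norm s x) * Hs_norm s h) \<and>
        (\<forall>h. in_Hs s h \<longrightarrow> Hs_linear s (D2Psi x h)) \<and>
        (\<forall>k. in_Hs s k \<longrightarrow> Hs_linear s (\<lambda>h. D2Psi x h k)) \<and>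
        (\<forall>h k. in_Hs s h \<longrightarrow> in_Hs s k \<longrightarrow>
            \<bar>D2Psi x h k\<bar> \<le> K * Hs_norm s h * Hs_norm s k) \<and>
        (\<forall>e>0. \<exists>d>0. \<forall>h. in_Hs s h \<longrightarrow> Hs_norm s h < d \<longrightarrow>
            \<bar>Psi (\<lambda>i. x i + h i) - Psi x - DPsi x h\<bar> \<le> e * Hs_norm s h) \<and>
        (\<forall>e>0. \<exists>d>0. \<forall>h. in_Hs s h \<longrightarrow> Hs_norm s h < d \<longrightarrow>
            (\<forall>k. in_Hs s k \<longrightarrow>
              \<bar>DPsi (\<lambda>i. x i + h i) k - DPsi x k - D2Psi x h k\<bar>
                 \<le> e * Hs_norm s h * Hs_norm s k))))"

definition assumptions_A :: "real \<Rightarrow> (nat \<Rightarrow> real) \<Rightarrow> real \<Rightarrow> ((nat \<Rightarrow> real) \<Rightarrow> real) \<Rightarrow> bool" where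
  "assumptions_A kappa lam s Psi \<longleftrightarrow>
     kappa > 1/2 \<and> (\<forall>j. lam j > 0) \<and>
     (\<exists>c1 c2. 0 < c1 \<and> 0 < c2 \<and> (\<forall>j. c1 * real (Suc j) powr (- kappa) \<le> lam j \<and>
                                        lam j \<le> c2 * real (Suc j) powr (- kappa))) \<and>
     0 \<le> s \<and> s < kappa - 1/2 \<and>
     (\<exists>K. \<forall>x. in_Hs s x \<longrightarrow> 0 \<le> Psi x \<and> Psi x \<le> K * (1 + Hs_sq s x)) \<and>
     (\<exists>K. A4 s Psi K)"

definition Phi :: "real \<Rightarrow> real" where
  "Phi x = measure (density lborel (\<lambda>t. ennreal (std_normal_density t))) {..x}"

definition D_l :: "real \<Rightarrow> real \<Rightarrow> real" where
  "D_l l x = (if x = 0 then 2 * l\<^sup>2 * exp (- l\<^sup>2)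
     else 2 * l\<^sup>2 * exp (l\<^sup>2 * (x - 1)) * Phi (l * (1 - 2 * x) / sqrt (2 * x)))"

definition Gamma_l :: "real \<Rightarrow> real \<Rightarrow> real" where
  "Gamma_l l x = (if x = 0 then 2 * l\<^sup>2 * exp (- l\<^sup>2)
     else D_l l x + 2 * l\<^sup>2 * Phi (- l / sqrt (2 * x)))"

definition A_l :: "real \<Rightarrow> real \<Rightarrow> real" where
  "A_l l x = (if x = 0 then 2 * l\<^sup>2 * exp (- l\<^sup>2)
     else - 2 * x * D_l l x + Gamma_l l x)"

text \<open>One RWM step / the chain, driven by given noise values:
  xi k i = xi^{i,N}_k (coordinate i, 0-based) and u k a uniform variable,
  gamma_{k+1} = [u (k+1) < 1 \<and> e^{Q_k}], which is Bernoulli(1 \<and> e^{Q_k}).\<close>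
definition rwm_prop :: "(nat \<Rightarrow> real) \<Rightarrow> real \<Rightarrow> nat \<Rightarrow> (nat \<Rightarrow> real) \<Rightarrow> (nat \<Rightarrow> real) \<Rightarrow> (nat \<Rightarrow> real)" where
  "rwm_prop lam l N xi x = (\<lambda>i. if i < N then x i + sqrt (2 * l\<^sup>2 / real N) * lam i * xi i else x i)"

definition rwm_Q :: "(nat \<Rightarrow> real) \<Rightarrow> ((nat \<Rightarrow> real) \<Rightarrow> real) \<Rightarrow> nat \<Rightarrow> (nat \<Rightarrow> real) \<Rightarrow> (nat \<Rightarrow> real) \<Rightarrow> real" where
  "rwm_Q lam Psi N x y =
     1/2 * (\<Sum>i<N. (x i)\<^sup>2 / (lam i)\<^sup>2) - 1/2 * (\<Sum>i<N. (y i)\<^sup>2 / (lam i)\<^sup>2)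
     + Psi (proj N x) - Psi (proj N y)"

primrec rwm_chain :: "(nat \<Rightarrow> real) \<Rightarrow> ((nat \<Rightarrow> real) \<Rightarrow> real) \<Rightarrow> real \<Rightarrow> nat \<Rightarrow> (nat \<Rightarrow> real)
    \<Rightarrow> (nat \<Rightarrow> nat \<Rightarrow> real) \<Rightarrow> (nat \<Rightarrow> real) \<Rightarrow> nat \<Rightarrow> (nat \<Rightarrow> real)" where
  "rwm_chain lam Psi l N x0 xi u 0 = x0"
| "rwm_chain lam Psi l N x0 xi u (Suc k) =
     (let x = rwm_chain lam Psi l N x0 xi u k;
          y = rwm_prop lam l N (xi (Suc k)) x
      in if u (Suc k) < min 1 (exp (rwm_Q lam Psi N x y)) then y else x)"

definition S_N :: "(nat \<Rightarrow> real) \<Rightarrow> nat \<Rightarrow> (nat \<Rightarrow> real) \<Rightarrow> real" where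
  "S_N lam N x = (1 / real N) * (\<Sum>i<N. (x i)\<^sup>2 / (lam i)\<^sup>2)"

definition Sbar :: "nat \<Rightarrow> (nat \<Rightarrow> real) \<Rightarrow> real \<Rightarrow> real" where
  "Sbar N Sk t = Sk (nat \<lfloor>real N * t\<rfloor>)"

definition Sinterp :: "nat \<Rightarrow> (nat \<Rightarrow> real) \<Rightarrow> real \<Rightarrow> real" where
  "Sinterp N Sk t = (let k = nat \<lfloor>real N * t\<rfloor> in
      (real N * t - real k) * Sk (Suc k) + (real k + 1 - real N * t) * Sk k)"

end

theory Submission
  imports Defs "HOL-Real_Asymp.Real_Asymp"
begin



lemma cont_snd: "continuous_on A std_normal_density"
  unfolding std_normal_density_def by (intro continuous_intros) auto

lemma Phi_diff_integral:
  assumes "a \<le> b"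
  shows "Phi b - Phi a = integral {a..b} std_normal_density"
proof -
  interpret real_distribution std_normal_distribution by (rule real_dist_normal_dist)
  have si: "set_integrable lborel {a..b} std_normal_density"
    by (rule borel_integrable_atLeastAtMost') (rule cont_snd)
  have "Phi b - Phi a = measure std_normal_distribution {a<..b}"
  proof (cases "a = b")
    case True then show ?thesis by simp
  next
    case False
    then show ?thesis using cdf_diff_eq[of a b] assms unfolding Phi_def cdf_def by simp
  qed
  also have "\<dots> = enn2real (\<integral>\<^sup>+x. ennreal (std_normal_density x) * indicator {a<..b} x \<partial>lborel)"
    unfolding measure_def by (subst emeasure_density) auto
  also have "(\<integral>\<^sup>+x. ennreal (std_normal_density x) * indicator {a<..b} x \<partial>lborel)
      = (\<integral>\<^sup>+x. ennreal (indicator {a..b} x * std_normal_density x) \<partial>lborel)"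
  proof (rule nn_integral_cong_AE)
    show "AE x in lborel. ennreal (std_normal_density x) * indicator {a<..b} x = ennreal (indicator {a..b} x * std_normal_density x)"
      using AE_lborel_singleton[of a] by eventually_elim (auto simp: indicator_def)
  qed
  also have "\<dots> = ennreal (LINT x:{a..b}|lborel. std_normal_density x)"
    using si unfolding set_integrable_def set_lebesgue_integral_def
    by (subst nn_integral_eq_integral) (auto simp: indicator_def)
  also have "(LINT x:{a..b}|lborel. std_normal_density x) = integral {a..b} std_normal_density"
    by (rule set_borel_integral_eq_integral[OF si])
  finally show ?thesis
    using integral_nonneg[OF set_borel_integral_eq_integral(1)[OF si]] by (simp add: normal_density_nonneg)
qed

lemma Phi_deriv: "(Phi has_real_derivative std_normal_density x) (at x)"
proof -
  let ?g = "\<lambda>u. Phi (x - 1) + integral {x - 1..u} std_normal_density"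
  have "(?g has_real_derivative std_normal_density x) (at x within {x-1..x+1})"
    using integral_has_real_derivative[OF cont_snd, of x "x-1" "x+1"]
    by (auto intro!: derivative_eq_intros)
  then have "(?g has_real_derivative std_normal_density x) (at x within {x-1<..<x+1})"
    by (rule DERIV_subset) auto
  have g: "(?g has_real_derivative std_normal_density x) (at x)"
  proof -
    have "at x within {x-1<..<x+1} = at x" by (rule at_within_open) auto
    then show ?thesis using \<open>(?g has_real_derivative std_normal_density x) (at x within {x-1<..<x+1})\<close> by simp
  qed
  show ?thesis
  proof (rule has_field_derivative_transform_within_open[OF g, of "{x-1<..<x+1}"])
    fix u assume "u \<in> {x-1<..<x+1}"
    then have "x - 1 \<le> u" by simp
    from Phi_diff_integral[OF this] show "?g u = Phi u" by simp
  qed auto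
qed


lemma Phi_lim_top: "(Phi \<longlongrightarrow> 1) at_top"
proof -
  interpret real_distribution std_normal_distribution by (rule real_dist_normal_dist)
  have "Phi = cdf std_normal_distribution" unfolding Phi_def cdf_def by (rule ext) simp
  then show ?thesis using cdf_lim_at_top_prob by simp
qed

lemma Phi_lim_bot: "(Phi \<longlongrightarrow> 0) at_bot"
proof -
  interpret real_distribution std_normal_distribution by (rule real_dist_normal_dist)
  have "Phi = cdf std_normal_distribution" unfolding Phi_def cdf_def by (rule ext) simp
  then show ?thesis using cdf_lim_at_bot by simp
qed

lemma Phi_bounds: "0 \<le> Phi x" "Phi x \<le> 1"
proof -
  interpret real_distribution std_normal_distribution by (rule real_dist_normal_dist)
  have "Phi = cdf std_normal_distribution" unfolding Phi_def cdf_def by (rule ext) simp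
  then show "0 \<le> Phi x" "Phi x \<le> 1" using cdf_nonneg cdf_bounded_prob by auto
qed


definition phi0 :: "real \<Rightarrow> real" where "phi0 t = exp (- t\<^sup>2 / 2) / sqrt (2 * pi)"

lemma snd_eq: "std_normal_density t = phi0 t"
  unfolding std_normal_density_def phi0_def by simp

lemma phi0_pos: "0 < phi0 t" unfolding phi0_def by simp

lemma phi0_deriv: "(phi0 has_real_derivative (- t * phi0 t)) (at t)"
  unfolding phi0_def by (auto intro!: derivative_eq_intros simp: field_simps power2_eq_square)

lemma Phi_neg_deriv: "((\<lambda>w. Phi (- w)) has_real_derivative (- phi0 w)) (at w)"
proof -
  have "(Phi has_real_derivative phi0 (-w)) (at (-w))" using Phi_deriv[of "-w"] by (simp add: snd_eq)
  have "(uminus has_real_derivative -1) (at w)" by (auto intro!: derivative_eq_intros)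
  from DERIV_chain'[OF this \<open>(Phi has_real_derivative phi0 (-w)) (at (-w))\<close>] show ?thesis
    by (simp add: phi0_def)
qed

lemma Phi_neg_lim: "((\<lambda>w. Phi (- w)) \<longlongrightarrow> 0) at_top"
  using filterlim_compose[OF Phi_lim_bot filterlim_uminus_at_bot_at_top] by (simp add: o_def)

lemma mills_upper:
  assumes "w > 0"
  shows "Phi (- w) \<le> phi0 w / w"
proof -
  let ?f = "\<lambda>w. phi0 w / w - Phi (- w)"
  have lim: "(?f \<longlongrightarrow> 0) at_top"
  proof -
    have "((\<lambda>w. phi0 w / w) \<longlongrightarrow> 0) at_top" unfolding phi0_def by real_asymp
    from tendsto_diff[OF this Phi_neg_lim] show ?thesis by simp
  qed
  have mono: "?f v \<le> ?f w" if "w \<le> v" for v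
  proof (rule DERIV_nonpos_imp_nonincreasing[OF that])
    fix x assume x: "w \<le> x" "x \<le> v"
    then have "x > 0" using assms by simp
    have d1: "((\<lambda>w. phi0 w / w) has_real_derivative ((-x*phi0 x)*x - phi0 x*1)/(x*x)) (at x)"
      by (rule DERIV_divide[OF phi0_deriv DERIV_ident]) (use \<open>x > 0\<close> in simp)
    have "DERIV ?f x :> ((-x*phi0 x)*x - phi0 x*1)/(x*x) - (- phi0 x)"
      by (rule DERIV_diff[OF d1 Phi_neg_deriv])
    moreover have "((-x*phi0 x)*x - phi0 x*1)/(x*x) - (- phi0 x) \<le> 0"
      using \<open>x > 0\<close> phi0_pos[of x] by (simp add: field_simps)
    ultimately show "\<exists>y. DERIV ?f x :> y \<and> y \<le> 0" by blast
  qed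
  have "0 \<le> ?f w"
    by (rule tendsto_upperbound[OF lim]) (auto intro!: eventually_at_top_linorderI[of w] mono)
  then show ?thesis by simp
qed

lemma mills_lower:
  assumes "w > 0"
  shows "phi0 w * (1 / w - 1 / w ^ 3) \<le> Phi (- w)"
proof -
  let ?f = "\<lambda>w. Phi (- w) - phi0 w * (1 / w - 1 / w ^ 3)"
  have lim: "(?f \<longlongrightarrow> 0) at_top"
  proof -
    have "((\<lambda>w. phi0 w * (1 / w - 1 / w ^ 3)) \<longlongrightarrow> 0) at_top" unfolding phi0_def by real_asymp
    from tendsto_diff[OF Phi_neg_lim this] show ?thesis by simp
  qed
  have mono: "?f v \<le> ?f w" if "w \<le> v" for v
  proof (rule DERIV_nonpos_imp_nonincreasing[OF that])
    fix x assume x: "w \<le> x" "x \<le> v"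
    then have "x > 0" using assms by simp
    have d0: "((\<lambda>w. 1 / w - 1 / w ^ 3) has_real_derivative (- 1 / x^2 + 3 / x^4)) (at x)"
      using \<open>x > 0\<close> by (auto intro!: derivative_eq_intros simp: field_simps power2_eq_square power3_eq_cube
        numeral_eq_Suc)
    have d1: "((\<lambda>w. phi0 w * (1 / w - 1 / w ^ 3)) has_real_derivative
        (-x*phi0 x) * (1 / x - 1 / x ^ 3) + phi0 x * (- 1 / x^2 + 3 / x^4)) (at x)"
      using DERIV_mult[OF phi0_deriv d0] by (simp add: mult.commute)
    have "DERIV ?f x :> (- phi0 x) - ((-x*phi0 x) * (1 / x - 1 / x ^ 3) + phi0 x * (- 1 / x^2 + 3 / x^4))"
      by (rule DERIV_diff[OF Phi_neg_deriv d1])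
    moreover have "(- phi0 x) - ((-x*phi0 x) * (1 / x - 1 / x ^ 3) + phi0 x * (- 1 / x^2 + 3 / x^4)) \<le> 0"
    proof -
      have "(- phi0 x) - ((-x*phi0 x) * (1 / x - 1 / x ^ 3) + phi0 x * (- 1 / x^2 + 3 / x^4))
          = - 3 * phi0 x / x^4"
        using \<open>x > 0\<close> by (simp add: field_simps power2_eq_square power3_eq_cube numeral_eq_Suc)
      then show ?thesis using \<open>x > 0\<close> phi0_pos[of x] by simp
    qed
    ultimately show "\<exists>y. DERIV ?f x :> y \<and> y \<le> 0" by blast
  qed
  have "0 \<le> ?f w"
    by (rule tendsto_upperbound[OF lim]) (auto intro!: eventually_at_top_linorderI[of w] mono)
  then show ?thesis by simp
qed


definition At :: "real \<Rightarrow> real \<Rightarrow> real" where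
  "At l u = 2 * l\<^sup>2 * ((1 - u\<^sup>2) * exp (l\<^sup>2 * (u\<^sup>2 / 2 - 1)) * Phi (l / u - l * u) + Phi (- l / u))"

lemma A_eq_At:
  assumes "x > 0"
  shows "A_l l x = At l (sqrt (2 * x))"
proof -
  define u where "u = sqrt (2 * x)"
  have u: "u > 0" "u\<^sup>2 = 2 * x" using assms by (auto simp: u_def)
  have su: "sqrt (2 * x) = u" by (simp add: u_def)
  have e1: "l * (1 - 2 * x) / sqrt (2 * x) = l / u - l * u"
    unfolding su u(2)[symmetric] using u(1) by (simp add: field_simps power2_eq_square)
  have e2: "l\<^sup>2 * (x - 1) = l\<^sup>2 * (u\<^sup>2 / 2 - 1)" using u by simp
  have e3: "- l / sqrt (2 * x) = - l / u" by (simp add: u_def)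
  have x2: "2 * x = u\<^sup>2" using u by simp
  have "A_l l x = At l u"
    unfolding A_l_def Gamma_l_def D_l_def e1 e2 e3 using assms
    using u(2) by (simp add: At_def algebra_simps x2)
  then show ?thesis by (simp add: u_def)
qed

lemma phi0_even: "phi0 (- t) = phi0 t" unfolding phi0_def by simp

lemma phi0_le1: "phi0 t \<le> 1"
proof -
  have "exp (- t\<^sup>2 / 2) \<le> 1" by simp
  moreover have "1 \<le> sqrt (2 * pi)" using pi_gt3 by simp
  ultimately have "exp (- t\<^sup>2 / 2) \<le> sqrt (2 * pi)" by linarith
  then show ?thesis unfolding phi0_def by (simp add: divide_le_eq_1)
qed

lemma exp_phi0_identity:
  assumes "u > 0"
  shows "exp (l\<^sup>2 * (u\<^sup>2 / 2 - 1)) * phi0 (l / u - l * u) = phi0 (l / u)"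
proof -
  have "(l / u - l * u)\<^sup>2 = (l/u)\<^sup>2 - 2 * l\<^sup>2 + l\<^sup>2 * u\<^sup>2"
    using assms by (simp add: power2_eq_square field_simps)
  then have "l\<^sup>2 * (u\<^sup>2 / 2 - 1) + (- (l / u - l * u)\<^sup>2 / 2) = - (l/u)\<^sup>2 / 2"
    by (simp add: field_simps)
  then show ?thesis unfolding phi0_def
    by (simp add: exp_add[symmetric])
qed

lemma At_deriv:
  assumes "u > 0"
  shows "(At l has_real_derivative
     2 * l\<^sup>2 * ((- 2 * u + l\<^sup>2 * u - l\<^sup>2 * u ^ 3) * exp (l\<^sup>2 * (u\<^sup>2 / 2 - 1)) * Phi (l / u - l * u)
       + l * u\<^sup>2 * phi0 (l / u))) (at u)"
proof -
  let ?E = "\<lambda>u. exp (l\<^sup>2 * (u\<^sup>2 / 2 - 1))"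
  have dE: "(?E has_real_derivative l\<^sup>2 * u * ?E u) (at u)"
    by (auto intro!: derivative_eq_intros simp: field_simps)
  have dw: "((\<lambda>u. l / u - l * u) has_real_derivative (- l / u\<^sup>2 - l)) (at u)"
    using assms by (auto intro!: derivative_eq_intros simp: field_simps power2_eq_square)
  have dP: "((\<lambda>u. Phi (l / u - l * u)) has_real_derivative phi0 (l / u - l * u) * (- l / u\<^sup>2 - l)) (at u)"
    using DERIV_chain'[OF dw Phi_deriv] by (simp add: snd_eq mult.commute)
  have dv: "((\<lambda>u. - l / u) has_real_derivative (l / u\<^sup>2)) (at u)"
    using assms by (auto intro!: derivative_eq_intros simp: field_simps power2_eq_square)
  have dQ: "((\<lambda>u. Phi (- l / u)) has_real_derivative phi0 (- l / u) * (l / u\<^sup>2)) (at u)"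
    using DERIV_chain'[OF dv Phi_deriv] by (simp add: snd_eq mult.commute)
  have d1: "((\<lambda>u. 1 - u\<^sup>2) has_real_derivative - 2 * u) (at u)"
    by (auto intro!: derivative_eq_intros)
  have d2: "((\<lambda>u. (1 - u\<^sup>2) * ?E u) has_real_derivative (- 2 * u) * ?E u + (l\<^sup>2 * u * ?E u) * (1 - u\<^sup>2)) (at u)"
    by (rule DERIV_mult[OF d1 dE])
  have d3: "((\<lambda>u. (1 - u\<^sup>2) * ?E u * Phi (l / u - l * u)) has_real_derivative
       ((- 2 * u) * ?E u + (l\<^sup>2 * u * ?E u) * (1 - u\<^sup>2)) * Phi (l / u - l * u)
      + (phi0 (l / u - l * u) * (- l / u\<^sup>2 - l)) * ((1 - u\<^sup>2) * ?E u)) (at u)"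
    by (rule DERIV_mult[OF d2 dP])
  have "(At l has_real_derivative 2 * l\<^sup>2 * ((((- 2 * u) * ?E u + (l\<^sup>2 * u * ?E u) * (1 - u\<^sup>2)) * Phi (l / u - l * u)
      + (phi0 (l / u - l * u) * (- l / u\<^sup>2 - l)) * ((1 - u\<^sup>2) * ?E u)) + phi0 (- l / u) * (l / u\<^sup>2))) (at u)"
    unfolding At_def by (rule DERIV_cmult[OF DERIV_add[OF d3 dQ]])
  moreover have "2 * l\<^sup>2 * ((((- 2 * u) * ?E u + (l\<^sup>2 * u * ?E u) * (1 - u\<^sup>2)) * Phi (l / u - l * u)
      + (phi0 (l / u - l * u) * (- l / u\<^sup>2 - l)) * ((1 - u\<^sup>2) * ?E u)) + phi0 (- l / u) * (l / u\<^sup>2))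
    = 2 * l\<^sup>2 * ((- 2 * u + l\<^sup>2 * u - l\<^sup>2 * u ^ 3) * ?E u * Phi (l / u - l * u)
       + l * u\<^sup>2 * phi0 (l / u))"
  proof -
    have f1: "(phi0 (l / u - l * u) * (- l / u\<^sup>2 - l)) * ((1 - u\<^sup>2) * ?E u) = (1 - u\<^sup>2) * (- l / u\<^sup>2 - l) * phi0 (l / u)"
      by (subst exp_phi0_identity[OF assms, symmetric]) (simp add: mult_ac)
    have f2: "phi0 (- l / u) = phi0 (l / u)" using phi0_even[of "l/u"] by simp
    have f3: "(1 - u\<^sup>2) * (- l / u\<^sup>2 - l) * phi0 (l / u) + phi0 (l / u) * (l / u\<^sup>2) = l * u\<^sup>2 * phi0 (l / u)"
    proof -
      have "(1 - u\<^sup>2) * (- l / u\<^sup>2 - l) = l * u\<^sup>2 - l / u\<^sup>2"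
        using assms by (simp add: field_simps power2_eq_square)
      then have "(1 - u\<^sup>2) * (- l / u\<^sup>2 - l) * phi0 (l / u) = (l * u\<^sup>2 - l / u\<^sup>2) * phi0 (l / u)" by simp
      moreover have "(l * u\<^sup>2 - l / u\<^sup>2) * phi0 (l / u) + phi0 (l / u) * (l / u\<^sup>2) = l * u\<^sup>2 * phi0 (l / u)"
        by (simp add: left_diff_distrib)
      ultimately show ?thesis by (simp only:)
    qed
    have X: "(phi0 (l / u - l * u) * (- l / u\<^sup>2 - l)) * ((1 - u\<^sup>2) * ?E u) + phi0 (- l / u) * (l / u\<^sup>2) = l * u\<^sup>2 * phi0 (l / u)"
      unfolding f1 f2 by (rule f3)
    have C: "(- 2 * u) * ?E u + (l\<^sup>2 * u * ?E u) * (1 - u\<^sup>2) = (- 2 * u + l\<^sup>2 * u - l\<^sup>2 * u ^ 3) * ?E u"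
      by (simp add: algebra_simps power3_eq_cube power2_eq_square)
    show ?thesis
      unfolding add.assoc X[symmetric] C by (simp add: algebra_simps)
  qed
  ultimately show ?thesis by (simp only:)
qed


lemma large_alg:
  fixes l u w R :: real
  assumes l: "l > 0" and u: "u \<ge> 2" and w: "w = l * u - l / u"
    and R1: "1 / w - 1 / w ^ 3 \<le> R" and R2: "R \<le> 1 / w"
  shows "\<bar>(- 2 * u + l\<^sup>2 * u - l\<^sup>2 * u ^ 3) * R + l * u\<^sup>2\<bar> \<le> 8 / (3 * l) + 2 * (1 + l\<^sup>2) / l ^ 3"
proof -
  define q where "q = u\<^sup>2 - 1"
  have "u\<^sup>2 \<ge> 2\<^sup>2" by (rule power_mono) (use u in auto)
  then have u2: "u\<^sup>2 \<ge> 4" by simp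
  then have q3: "q \<ge> 3" by (simp add: q_def)
  have upos: "u > 0" using u by simp
  have wq: "w = l * q / u" using upos by (simp add: w q_def field_simps power2_eq_square)
  have wpos: "w > 0" using wq l q3 upos by simp
  define c where "c = - 2 * u + l\<^sup>2 * u - l\<^sup>2 * u ^ 3"
  have cq: "c = - u * (2 + l\<^sup>2 * q)" by (simp add: c_def q_def algebra_simps power2_eq_square power3_eq_cube)
  have cneg: "c \<le> 0" using cq upos l q3 by (simp add: mult_nonneg_nonneg)
  have key: "c / w + l * u\<^sup>2 = - 2 * u\<^sup>2 / (l * q)"
    using l q3 upos unfolding cq wq by (simp add: field_simps power2_eq_square)
  have uq: "u\<^sup>2 / q \<le> 4 / 3" using q3 by (simp add: q_def field_simps)
  have low: "c * R + l * u\<^sup>2 \<ge> - 8 / (3 * l)"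
  proof -
    have "c * R \<ge> c * (1 / w)" by (rule mult_left_mono_neg[OF R2 cneg])
    then have "c * R + l * u\<^sup>2 \<ge> - 2 * u\<^sup>2 / (l * q)" using key by simp
    moreover have "- 2 * u\<^sup>2 / (l * q) = - 2 / l * (u\<^sup>2 / q)" by simp
    moreover have "- 2 / l * (u\<^sup>2 / q) \<ge> - 2 / l * (4 / 3)"
      by (rule mult_left_mono_neg[OF uq]) (use l in simp)
    ultimately show ?thesis by simp
  qed
  have up: "c * R + l * u\<^sup>2 \<le> 2 * (1 + l\<^sup>2) / l ^ 3"
  proof -
    have "c * R \<le> c * (1 / w - 1 / w ^ 3)" by (rule mult_left_mono_neg[OF R1 cneg])
    then have "c * R + l * u\<^sup>2 \<le> - 2 * u\<^sup>2 / (l * q) - c / w ^ 3" using key by (simp add: algebra_simps)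
    also have "\<dots> \<le> - c / w ^ 3" using l q3 by simp
    also have "- c / w ^ 3 = (u\<^sup>2)\<^sup>2 * (2 + l\<^sup>2 * q) / (l ^ 3 * q ^ 3)"
      unfolding cq wq using upos l q3 by (simp add: field_simps power2_eq_square power3_eq_cube)
    also have "\<dots> \<le> (16 / 9 * q\<^sup>2) * (2 + l\<^sup>2 * q) / (l ^ 3 * q ^ 3)"
    proof (rule divide_right_mono, rule mult_right_mono)
      have "u\<^sup>2 = q + 1" by (simp add: q_def)
      then have "(u\<^sup>2)\<^sup>2 = (q + 1)\<^sup>2" by simp
      also have "\<dots> \<le> (4 / 3 * q)\<^sup>2" by (rule power_mono) (use q3 in auto)
      finally show "(u\<^sup>2)\<^sup>2 \<le> 16 / 9 * q\<^sup>2" by (simp add: power2_eq_square)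
    qed (use l q3 in auto)
    also have "\<dots> = 16 / 9 * (2 / q + l\<^sup>2) / l ^ 3"
      using l q3 by (simp add: field_simps power2_eq_square power3_eq_cube)
    also have "\<dots> \<le> 16 / 9 * (1 + l\<^sup>2) / l ^ 3"
      using l q3 by (intro divide_right_mono mult_left_mono add_right_mono) (auto simp: field_simps)
    also have "\<dots> \<le> 2 * (1 + l\<^sup>2) / l ^ 3"
      using l by (intro divide_right_mono mult_right_mono) auto
    finally show ?thesis .
  qed
  have nn: "8 / (3 * l) \<ge> 0" "2 * (1 + l\<^sup>2) / l ^ 3 \<ge> 0" using l by auto
  have "\<bar>c * R + l * u\<^sup>2\<bar> \<le> 8 / (3 * l) + 2 * (1 + l\<^sup>2) / l ^ 3"
    by (intro abs_leI) (use low up nn in linarith)+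
  then show ?thesis unfolding c_def .
qed


definition Bd :: "real \<Rightarrow> real" where
  "Bd l = (4 + 10 * l\<^sup>2) * exp (l\<^sup>2) + 4 * l + 8 / (3 * l) + 2 * (1 + l\<^sup>2) / l ^ 3"

lemma deriv_bound:
  assumes l: "l > 0" and u: "u > 0"
  shows "\<bar>(- 2 * u + l\<^sup>2 * u - l\<^sup>2 * u ^ 3) * exp (l\<^sup>2 * (u\<^sup>2 / 2 - 1)) * Phi (l / u - l * u)
       + l * u\<^sup>2 * phi0 (l / u)\<bar> \<le> Bd l"
proof -
  let ?c = "- 2 * u + l\<^sup>2 * u - l\<^sup>2 * u ^ 3"
  let ?E = "exp (l\<^sup>2 * (u\<^sup>2 / 2 - 1))"
  let ?P = "Phi (l / u - l * u)"
  let ?K = "phi0 (l / u)"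
  have Kpos: "0 < ?K" and K1: "?K \<le> 1" using phi0_pos phi0_le1 by auto
  have nn: "0 \<le> 8 / (3 * l)" "0 \<le> 2 * (1 + l\<^sup>2) / l ^ 3" "0 \<le> 4 * l" using l by auto
  show ?thesis
  proof (cases "u \<le> 2")
    case True
    have "\<bar>?c\<bar> \<le> 2 * u + l\<^sup>2 * u + l\<^sup>2 * u ^ 3" using u by (simp add: abs_le_iff)
    also have "\<dots> \<le> 2 * 2 + l\<^sup>2 * 2 + l\<^sup>2 * 2 ^ 3"
      using True u by (intro add_mono mult_left_mono power_mono) auto
    finally have c: "\<bar>?c\<bar> \<le> 4 + 10 * l\<^sup>2" by simp
    have "u\<^sup>2 \<le> 2\<^sup>2" using True u by (intro power_mono) auto
    then have "l\<^sup>2 * (u\<^sup>2 / 2 - 1) \<le> l\<^sup>2" by (intro mult_left_le) auto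
    then have E: "?E \<le> exp (l\<^sup>2)" by simp
    have P: "0 \<le> ?P" "?P \<le> 1" using Phi_bounds by auto
    have "\<bar>?c * ?E * ?P\<bar> = \<bar>?c\<bar> * ?E * ?P" using P by (simp add: abs_mult)
    also have "\<dots> \<le> (4 + 10 * l\<^sup>2) * exp (l\<^sup>2) * 1"
      using c E P by (intro mult_mono) auto
    finally have t1: "\<bar>?c * ?E * ?P\<bar> \<le> (4 + 10 * l\<^sup>2) * exp (l\<^sup>2)" by simp
    have "\<bar>l * u\<^sup>2 * ?K\<bar> = l * u\<^sup>2 * ?K" using l Kpos by simp
    also have "\<dots> \<le> l * 2\<^sup>2 * 1" using \<open>u\<^sup>2 \<le> 2\<^sup>2\<close> l K1 Kpos by (intro mult_mono) auto
    finally have t2: "\<bar>l * u\<^sup>2 * ?K\<bar> \<le> 4 * l" by simp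
    have "\<bar>?c * ?E * ?P + l * u\<^sup>2 * ?K\<bar> \<le> \<bar>?c * ?E * ?P\<bar> + \<bar>l * u\<^sup>2 * ?K\<bar>" by (rule abs_triangle_ineq)
    then show ?thesis using t1 t2 nn unfolding Bd_def by linarith
  next
    case False
    define w where "w = l * u - l / u"
    have "1 < u * u" using False by (smt (verit) mult_less_cancel_left1)
    then have "l * 1 < l * (u * u)" using l by (intro mult_strict_left_mono) auto
    then have "l / u < l * u" using u by (simp add: field_simps)
    then have wpos: "w > 0" by (simp add: w_def)
    have Pw: "?P = Phi (- w)" by (simp add: w_def)
    have Kw: "?E * phi0 w = ?K"
      using exp_phi0_identity[OF u, of l] phi0_even[of w] by (simp add: w_def)
    define R where "R = ?E * ?P / ?K"
    have ER: "?E * ?P = ?K * R" using Kpos by (simp add: R_def)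
    have R1: "1 / w - 1 / w ^ 3 \<le> R"
    proof -
      have "phi0 w * (1 / w - 1 / w ^ 3) \<le> Phi (- w)" by (rule mills_lower[OF wpos])
      then have "?E * (phi0 w * (1 / w - 1 / w ^ 3)) \<le> ?E * ?P" unfolding Pw by simp
      then have "?K * (1 / w - 1 / w ^ 3) \<le> ?K * R" unfolding ER Kw[symmetric] by (simp add: mult.assoc)
      then show ?thesis using Kpos by simp
    qed
    have R2: "R \<le> 1 / w"
    proof -
      have "Phi (- w) \<le> phi0 w / w" by (rule mills_upper[OF wpos])
      then have "?E * ?P \<le> ?E * (phi0 w / w)" unfolding Pw by (intro mult_left_mono) auto
      then have "?K * R \<le> ?K * (1 / w)" unfolding ER Kw[symmetric] by (simp add: mult.assoc)
      then show ?thesis using Kpos by (metis mult_le_cancel_left_pos)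
    qed
    have b: "\<bar>?c * R + l * u\<^sup>2\<bar> \<le> 8 / (3 * l) + 2 * (1 + l\<^sup>2) / l ^ 3"
      by (rule large_alg[OF l _ w_def R1 R2]) (use False in simp)
    have "?c * ?E * ?P + l * u\<^sup>2 * ?K = ?K * (?c * R + l * u\<^sup>2)"
    proof -
      have "?c * ?E * ?P = ?c * (?E * ?P)" by (simp only: mult.assoc)
      then show ?thesis unfolding ER by (simp add: algebra_simps)
    qed
    then have "\<bar>?c * ?E * ?P + l * u\<^sup>2 * ?K\<bar> = ?K * \<bar>?c * R + l * u\<^sup>2\<bar>"
      using Kpos by (simp add: abs_mult)
    also have "\<dots> \<le> 1 * (8 / (3 * l) + 2 * (1 + l\<^sup>2) / l ^ 3)"
      using b K1 Kpos by (intro mult_mono) auto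
    finally have fin: "\<bar>?c * ?E * ?P + l * u\<^sup>2 * ?K\<bar> \<le> 8 / (3 * l) + 2 * (1 + l\<^sup>2) / l ^ 3" by simp
    have "0 \<le> (4 + 10 * l\<^sup>2) * exp (l\<^sup>2)" by simp
    then show ?thesis using fin nn unfolding Bd_def by linarith
  qed
qed


lemma At_lip:
  assumes l: "l > 0" and a: "0 < a" and ab: "a \<le> b"
  shows "\<bar>At l b - At l a\<bar> \<le> 2 * l\<^sup>2 * Bd l * (b - a)"
proof (cases "a = b")
  case True then show ?thesis by simp
next
  case False
  then have "a < b" using ab by simp
  let ?f' = "\<lambda>u. 2 * l\<^sup>2 * ((- 2 * u + l\<^sup>2 * u - l\<^sup>2 * u ^ 3) * exp (l\<^sup>2 * (u\<^sup>2 / 2 - 1)) * Phi (l / u - l * u)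
       + l * u\<^sup>2 * phi0 (l / u))"
  obtain z where z: "a < z" "z < b" "At l b - At l a = (b - a) * ?f' z"
    using MVT2[OF \<open>a < b\<close>, of "At l" ?f'] At_deriv a by force
  have "\<bar>?f' z\<bar> \<le> 2 * l\<^sup>2 * Bd l"
  proof -
    have "\<bar>?f' z\<bar> = 2 * l\<^sup>2 * \<bar>(- 2 * z + l\<^sup>2 * z - l\<^sup>2 * z ^ 3) * exp (l\<^sup>2 * (z\<^sup>2 / 2 - 1)) * Phi (l / z - l * z)
       + l * z\<^sup>2 * phi0 (l / z)\<bar>" by (simp add: abs_mult)
    also have "\<dots> \<le> 2 * l\<^sup>2 * Bd l"
      by (rule mult_left_mono[OF deriv_bound[OF l]]) (use z a in auto)
    finally show ?thesis .
  qed
  then have "\<bar>(b - a) * ?f' z\<bar> \<le> (b - a) * (2 * l\<^sup>2 * Bd l)"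
    using ab by (simp add: abs_mult mult_left_mono)
  then show ?thesis using z by (simp add: mult_ac)
qed

lemma At_lim0:
  assumes l: "l > 0"
  shows "(At l \<longlongrightarrow> 2 * l\<^sup>2 * exp (- l\<^sup>2)) (at_right 0)"
proof -
  have f1: "filterlim (\<lambda>u. l / u - l * u) at_top (at_right (0::real))" using l by real_asymp
  have f2: "filterlim (\<lambda>u. - l / u) at_bot (at_right (0::real))" using l by real_asymp
  have P1: "((\<lambda>u. Phi (l / u - l * u)) \<longlongrightarrow> 1) (at_right 0)"
    using filterlim_compose[OF Phi_lim_top f1] by (simp add: o_def)
  have P2: "((\<lambda>u. Phi (- l / u)) \<longlongrightarrow> 0) (at_right 0)"
    using filterlim_compose[OF Phi_lim_bot f2] by (simp add: o_def)
  have E: "((\<lambda>u::real. (1 - u\<^sup>2) * exp (l\<^sup>2 * (u\<^sup>2 / 2 - 1))) \<longlongrightarrow> (1 - 0\<^sup>2) * exp (l\<^sup>2 * (0\<^sup>2 / 2 - 1))) (at_right 0)"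
    by (intro tendsto_intros) auto
  have "(At l \<longlongrightarrow> 2 * l\<^sup>2 * ((1 - 0\<^sup>2) * exp (l\<^sup>2 * (0\<^sup>2 / 2 - 1)) * 1 + 0)) (at_right 0)"
    unfolding At_def by (intro tendsto_intros E P1 P2) auto
  then show ?thesis by simp
qed

lemma A_holder_sqrt:
  assumes l: "l > 0" and x: "0 \<le> x" and y: "0 \<le> y"
  shows "\<bar>A_l l x - A_l l y\<bar> \<le> 2 * l\<^sup>2 * Bd l * \<bar>sqrt (2 * x) - sqrt (2 * y)\<bar>"
proof -
  let ?L = "2 * l\<^sup>2 * Bd l"
  have lip: "\<bar>At l a - At l b\<bar> \<le> ?L * \<bar>a - b\<bar>" if "0 < a" "0 < b" for a b
  proof (cases "a \<le> b")
    case True then show ?thesis using At_lip[OF l that(1) True] by (simp add: abs_minus_commute)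
  next
    case False then show ?thesis using At_lip[OF l that(2), of a] by simp
  qed
  have A0: "A_l l 0 = 2 * l\<^sup>2 * exp (- l\<^sup>2)" by (simp add: A_l_def)
  have zero: "\<bar>A_l l 0 - At l v\<bar> \<le> ?L * v" if v: "v > 0" for v
  proof -
    have t1: "((\<lambda>u. \<bar>At l u - At l v\<bar>) \<longlongrightarrow> \<bar>2 * l\<^sup>2 * exp (- l\<^sup>2) - At l v\<bar>) (at_right 0)"
      by (intro tendsto_intros At_lim0 l)
    have t2: "((\<lambda>u. ?L * \<bar>u - v\<bar>) \<longlongrightarrow> ?L * \<bar>0 - v\<bar>) (at_right 0)"
      by (intro tendsto_intros)
    have ev: "eventually (\<lambda>u. \<bar>At l u - At l v\<bar> \<le> ?L * \<bar>u - v\<bar>) (at_right 0)"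
    proof -
      have "eventually (\<lambda>u. u > (0::real)) (at_right 0)" by (rule eventually_at_right_less)
      then show ?thesis by eventually_elim (rule lip, assumption, rule v)
    qed
    have "\<bar>2 * l\<^sup>2 * exp (- l\<^sup>2) - At l v\<bar> \<le> ?L * \<bar>0 - v\<bar>"
      by (rule tendsto_le[OF trivial_limit_at_right_real t2 t1 ev])
    then show ?thesis using A0 v by simp
  qed
  show ?thesis
  proof (cases "x = 0")
    case True
    show ?thesis
    proof (cases "y = 0")
      case True then show ?thesis using \<open>x = 0\<close> by simp
    next
      case False
      then have yp: "y > 0" using y by simp
      have "\<bar>A_l l 0 - At l (sqrt (2 * y))\<bar> \<le> ?L * sqrt (2 * y)" by (rule zero) (use yp in simp)
      then show ?thesis using True A_eq_At[OF yp] y by simp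
    qed
  next
    case False
    then have xp: "x > 0" using x by simp
    show ?thesis
    proof (cases "y = 0")
      case True
      have "\<bar>A_l l 0 - At l (sqrt (2 * x))\<bar> \<le> ?L * sqrt (2 * x)" by (rule zero) (use xp in simp)
      then show ?thesis using True A_eq_At[OF xp] x by (simp add: abs_minus_commute)
    next
      case False
      then have yp: "y > 0" using y by simp
      show ?thesis using lip[of "sqrt (2 * x)" "sqrt (2 * y)"] A_eq_At[OF xp] A_eq_At[OF yp] xp yp by simp
    qed
  qed
qed

lemma sqrt_diff_sq: "0 \<le> a \<Longrightarrow> 0 \<le> b \<Longrightarrow> (sqrt a - sqrt b)\<^sup>2 \<le> \<bar>a - b\<bar>"
proof -
  assume a: "0 \<le> a" and b: "0 \<le> b"
  have "(sqrt a - sqrt b)\<^sup>2 = \<bar>sqrt a - sqrt b\<bar> * \<bar>sqrt a - sqrt b\<bar>" by (simp add: power2_eq_square abs_mult_self_eq)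
  also have "\<dots> \<le> \<bar>sqrt a - sqrt b\<bar> * (sqrt a + sqrt b)"
    using a b by (intro mult_left_mono abs_leI) auto
  also have "\<dots> = \<bar>(sqrt a - sqrt b) * (sqrt a + sqrt b)\<bar>" using a b by (simp add: abs_mult)
  also have "(sqrt a - sqrt b) * (sqrt a + sqrt b) = a - b" using a b by (simp add: algebra_simps)
  finally show ?thesis .
qed

lemma A_holder:
  assumes l: "l > 0"
  shows "\<exists>C\<ge>0. \<forall>x y. 0 \<le> x \<longrightarrow> 0 \<le> y \<longrightarrow> (A_l l x - A_l l y)\<^sup>2 \<le> C * \<bar>x - y\<bar>"
proof (intro exI[of _ "2 * (2 * l\<^sup>2 * Bd l)\<^sup>2"] conjI allI impI)
  fix x y :: real assume x: "0 \<le> x" and y: "0 \<le> y"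
  have "(A_l l x - A_l l y)\<^sup>2 = \<bar>A_l l x - A_l l y\<bar>\<^sup>2" by simp
  also have "\<dots> \<le> (2 * l\<^sup>2 * Bd l * \<bar>sqrt (2 * x) - sqrt (2 * y)\<bar>)\<^sup>2"
    by (rule power_mono[OF A_holder_sqrt[OF l x y]]) simp
  also have "\<dots> = (2 * l\<^sup>2 * Bd l)\<^sup>2 * (sqrt (2 * x) - sqrt (2 * y))\<^sup>2" by (simp add: power_mult_distrib)
  also have "\<dots> \<le> (2 * l\<^sup>2 * Bd l)\<^sup>2 * \<bar>2 * x - 2 * y\<bar>"
    by (intro mult_left_mono sqrt_diff_sq) (use x y in auto)
  also have "\<bar>2 * x - 2 * y\<bar> = 2 * \<bar>x - y\<bar>" by (simp add: abs_if)
  also have "(2 * l\<^sup>2 * Bd l)\<^sup>2 * (2 * \<bar>x - y\<bar>) = 2 * (2 * l\<^sup>2 * Bd l)\<^sup>2 * \<bar>x - y\<bar>" by simp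
  finally show "(A_l l x - A_l l y)\<^sup>2 \<le> 2 * (2 * l\<^sup>2 * Bd l)\<^sup>2 * \<bar>x - y\<bar>" .
qed simp


lemma chain_repr:
  "\<exists>\<gamma>::nat \<Rightarrow> real. (\<forall>j. \<gamma> j = 0 \<or> \<gamma> j = 1) \<and>
     (\<forall>i<N. rwm_chain lam Psi l N x0 xi u k i = x0 i + sqrt (2 * l\<^sup>2 / real N) * lam i * (\<Sum>j\<in>{1..k}. \<gamma> j * xi j i))"
proof (induction k)
  case 0
  show ?case by (intro exI[of _ "\<lambda>_. 0"]) simp
next
  case (Suc k)
  then obtain \<gamma> :: "nat \<Rightarrow> real" where g01: "\<forall>j. \<gamma> j = 0 \<or> \<gamma> j = 1"
    and rep: "\<forall>i<N. rwm_chain lam Psi l N x0 xi u k i = x0 i + sqrt (2 * l\<^sup>2 / real N) * lam i * (\<Sum>j\<in>{1..k}. \<gamma> j * xi j i)"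
    by blast
  let ?c = "sqrt (2 * l\<^sup>2 / real N)"
  let ?x = "rwm_chain lam Psi l N x0 xi u k"
  let ?y = "rwm_prop lam l N (xi (Suc k)) ?x"
  have split: "{1..Suc k} = insert (Suc k) {1..k}" by auto
  have sumeq: "(\<Sum>j\<in>{1..k}. (\<gamma>(Suc k := v)) j * xi j i) = (\<Sum>j\<in>{1..k}. \<gamma> j * xi j i)" for v i
    by (rule sum.cong) auto
  show ?case
  proof (cases "u (Suc k) < min 1 (exp (rwm_Q lam Psi N ?x ?y))")
    case True
    have eq: "rwm_chain lam Psi l N x0 xi u (Suc k) = ?y"
      unfolding rwm_chain.simps Let_def by (rule if_P[OF True])
    show ?thesis
    proof (intro exI[of _ "\<gamma>(Suc k := 1)"] conjI)
      show "\<forall>j. (\<gamma>(Suc k := 1)) j = 0 \<or> (\<gamma>(Suc k := 1)) j = 1" using g01 by simp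
      show "\<forall>i<N. rwm_chain lam Psi l N x0 xi u (Suc k) i = x0 i + ?c * lam i * (\<Sum>j\<in>{1..Suc k}. (\<gamma>(Suc k := 1)) j * xi j i)"
      proof (intro allI impI)
      fix i assume i: "i < N"
      show "rwm_chain lam Psi l N x0 xi u (Suc k) i = x0 i + ?c * lam i * (\<Sum>j\<in>{1..Suc k}. (\<gamma>(Suc k := 1)) j * xi j i)"
        unfolding eq split using i rep sumeq[of 1 i]
        by (simp add: rwm_prop_def algebra_simps)
      qed
    qed
  next
    case False
    have eq: "rwm_chain lam Psi l N x0 xi u (Suc k) = ?x"
      unfolding rwm_chain.simps Let_def by (rule if_not_P[OF False])
    show ?thesis
    proof (intro exI[of _ "\<gamma>(Suc k := 0)"] conjI)
      show "\<forall>j. (\<gamma>(Suc k := 0)) j = 0 \<or> (\<gamma>(Suc k := 0)) j = 1" using g01 by simp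
      show "\<forall>i<N. rwm_chain lam Psi l N x0 xi u (Suc k) i = x0 i + ?c * lam i * (\<Sum>j\<in>{1..Suc k}. (\<gamma>(Suc k := 0)) j * xi j i)"
      proof (intro allI impI)
      fix i assume i: "i < N"
      show "rwm_chain lam Psi l N x0 xi u (Suc k) i = x0 i + ?c * lam i * (\<Sum>j\<in>{1..Suc k}. (\<gamma>(Suc k := 0)) j * xi j i)"
        unfolding eq split using i rep sumeq[of 0 i]
        by (simp add: algebra_simps)
      qed
    qed
  qed
qed

lemma chain_step:
  "S_N lam N (rwm_chain lam Psi l N x0 xi u (Suc k)) = S_N lam N (rwm_chain lam Psi l N x0 xi u k) \<or>
   S_N lam N (rwm_chain lam Psi l N x0 xi u (Suc k)) =
     S_N lam N (rwm_prop lam l N (xi (Suc k)) (rwm_chain lam Psi l N x0 xi u k))"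
  by (simp add: Let_def)


lemma sq_sum_le: "((x::real) + y)\<^sup>2 \<le> 2 * x\<^sup>2 + 2 * y\<^sup>2"
proof -
  have "0 \<le> (x - y)\<^sup>2" by simp
  then show ?thesis by (simp add: power2_eq_square algebra_simps)
qed

lemma delta_bound:
  fixes l :: real
  assumes lam: "\<And>i. lam i > 0" and N: "N > 0" and c2_def: "c2 = 2 * l\<^sup>2 / real N"
  shows "(real N)\<^sup>2 * (S_N lam N (rwm_chain lam Psi l N x0 xi u (Suc k)) - S_N lam N (rwm_chain lam Psi l N x0 xi u k))\<^sup>2
     \<le> 16 * c2 * (\<Sum>i<N. (x0 i / lam i)\<^sup>2) * (\<Sum>i<N. (xi (Suc k) i)\<^sup>2)
       + 16 * c2\<^sup>2 * real k * (\<Sum>j\<in>{1..k}. (\<Sum>i<N. xi j i * xi (Suc k) i)\<^sup>2)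
       + 2 * c2\<^sup>2 * real N * (\<Sum>i<N. (xi (Suc k) i) ^ 4)"
    (is "?L \<le> ?G")
proof -
  let ?X = "rwm_chain lam Psi l N x0 xi u k"
  let ?c = "sqrt (2 * l\<^sup>2 / real N)"
  define e where "e i = xi (Suc k) i" for i
  define a where "a i = x0 i / lam i" for i
  define b where "b i = ?X i / lam i" for i
  define V where "V = (\<Sum>i<N. (e i)\<^sup>2)"
  define Q where "Q j = (\<Sum>i<N. xi j i * e i)" for j
  have c2: "?c\<^sup>2 = c2" unfolding c2_def by simp
  have Gnn1: "0 \<le> 16 * c2 * (\<Sum>i<N. (x0 i / lam i)\<^sup>2) * (\<Sum>i<N. (xi (Suc k) i)\<^sup>2)"
    unfolding c2_def by (intro mult_nonneg_nonneg sum_nonneg) auto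
  have Gnn2: "0 \<le> 16 * c2\<^sup>2 * real k * (\<Sum>j\<in>{1..k}. (\<Sum>i<N. xi j i * xi (Suc k) i)\<^sup>2)"
    by (intro mult_nonneg_nonneg sum_nonneg) auto
  have Gnn3: "0 \<le> 2 * c2\<^sup>2 * real N * (\<Sum>i<N. (xi (Suc k) i) ^ 4)"
    by (intro mult_nonneg_nonneg sum_nonneg) (auto simp: zero_le_even_power)
  obtain \<gamma> :: "nat \<Rightarrow> real" where g01: "\<forall>j. \<gamma> j = 0 \<or> \<gamma> j = 1"
    and rep: "\<forall>i<N. ?X i = x0 i + ?c * lam i * (\<Sum>j\<in>{1..k}. \<gamma> j * xi j i)"
    using chain_repr by blast
  have brep: "b i = a i + ?c * (\<Sum>j\<in>{1..k}. \<gamma> j * xi j i)" if "i < N" for i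
    using rep that lam[of i] unfolding a_def b_def by (simp add: field_simps)
  show ?thesis
  proof (cases "S_N lam N (rwm_chain lam Psi l N x0 xi u (Suc k)) = S_N lam N ?X")
    case True
    then show ?thesis using Gnn1 Gnn2 Gnn3 by simp
  next
    case False
    then have S1: "S_N lam N (rwm_chain lam Psi l N x0 xi u (Suc k)) = S_N lam N (rwm_prop lam l N (xi (Suc k)) ?X)"
      using chain_step by metis
    have ND: "real N * (S_N lam N (rwm_prop lam l N (xi (Suc k)) ?X) - S_N lam N ?X)
        = 2 * ?c * (\<Sum>i<N. b i * e i) + c2 * V"
    proof -
      have "real N * (S_N lam N (rwm_prop lam l N (xi (Suc k)) ?X) - S_N lam N ?X)
          = (\<Sum>i<N. (rwm_prop lam l N (xi (Suc k)) ?X i)\<^sup>2 / (lam i)\<^sup>2 - (?X i)\<^sup>2 / (lam i)\<^sup>2)"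
        using N by (simp add: S_N_def sum_subtractf right_diff_distrib)
      also have "\<dots> = (\<Sum>i<N. 2 * ?c * (b i * e i) + c2 * (e i)\<^sup>2)"
      proof (rule sum.cong[OF refl])
        fix i assume "i \<in> {..<N}"
        then have iN: "i < N" by simp
        have lp: "lam i > 0" by (rule lam)
        have "(rwm_prop lam l N (xi (Suc k)) ?X i)\<^sup>2 / (lam i)\<^sup>2 = (b i + ?c * e i)\<^sup>2"
          using iN lp unfolding rwm_prop_def b_def e_def by (simp add: field_simps power2_eq_square)
        moreover have "(?X i)\<^sup>2 / (lam i)\<^sup>2 = (b i)\<^sup>2" unfolding b_def by (simp add: power_divide)
        moreover have "(b i + ?c * e i)\<^sup>2 - (b i)\<^sup>2 = 2 * ?c * (b i * e i) + ?c\<^sup>2 * (e i)\<^sup>2"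
          by (simp add: power2_eq_square algebra_simps)
        ultimately show "(rwm_prop lam l N (xi (Suc k)) ?X i)\<^sup>2 / (lam i)\<^sup>2 - (?X i)\<^sup>2 / (lam i)\<^sup>2
            = 2 * ?c * (b i * e i) + c2 * (e i)\<^sup>2"
          unfolding c2 by simp
      qed
      also have "\<dots> = 2 * ?c * (\<Sum>i<N. b i * e i) + c2 * V"
        unfolding V_def by (simp add: sum.distrib sum_distrib_left)
      finally show ?thesis .
    qed
    have be: "(\<Sum>i<N. b i * e i) = (\<Sum>i<N. a i * e i) + ?c * (\<Sum>j\<in>{1..k}. \<gamma> j * Q j)"
    proof -
      have "(\<Sum>i<N. b i * e i) = (\<Sum>i<N. a i * e i + ?c * (\<Sum>j\<in>{1..k}. \<gamma> j * (xi j i * e i)))"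
      proof (rule sum.cong[OF refl])
        fix i assume "i \<in> {..<N}"
        then have "b i * e i = (a i + ?c * (\<Sum>j\<in>{1..k}. \<gamma> j * xi j i)) * e i" using brep by simp
        also have "\<dots> = a i * e i + ?c * ((\<Sum>j\<in>{1..k}. \<gamma> j * xi j i) * e i)" by (simp add: distrib_right)
        also have "(\<Sum>j\<in>{1..k}. \<gamma> j * xi j i) * e i = (\<Sum>j\<in>{1..k}. \<gamma> j * (xi j i * e i))"
          by (simp add: sum_distrib_right mult.assoc)
        finally show "b i * e i = a i * e i + ?c * (\<Sum>j\<in>{1..k}. \<gamma> j * (xi j i * e i))" .
      qed
      also have "\<dots> = (\<Sum>i<N. a i * e i) + ?c * (\<Sum>i<N. \<Sum>j\<in>{1..k}. \<gamma> j * (xi j i * e i))"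
        by (simp add: sum.distrib sum_distrib_left)
      also have "(\<Sum>i<N. \<Sum>j\<in>{1..k}. \<gamma> j * (xi j i * e i)) = (\<Sum>j\<in>{1..k}. \<gamma> j * Q j)"
        unfolding Q_def by (subst sum.swap) (simp add: sum_distrib_left)
      finally show ?thesis .
    qed
    have cs1: "(\<Sum>i<N. a i * e i)\<^sup>2 \<le> (\<Sum>i<N. (a i)\<^sup>2) * V"
      unfolding V_def by (rule Cauchy_Schwarz_ineq_sum)
    have cs2: "(\<Sum>j\<in>{1..k}. \<gamma> j * Q j)\<^sup>2 \<le> real k * (\<Sum>j\<in>{1..k}. (Q j)\<^sup>2)"
    proof -
      have "(\<Sum>j\<in>{1..k}. \<gamma> j * Q j)\<^sup>2 \<le> (\<Sum>j\<in>{1..k}. (\<gamma> j)\<^sup>2) * (\<Sum>j\<in>{1..k}. (Q j)\<^sup>2)"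
        by (rule Cauchy_Schwarz_ineq_sum)
      also have "(\<Sum>j\<in>{1..k}. (\<gamma> j)\<^sup>2) \<le> (\<Sum>j\<in>{1..k}. 1)"
        by (rule sum_mono) (use g01 in \<open>metis one_power2 order_refl power_zero_numeral zero_le_one\<close>)
      then have "(\<Sum>j\<in>{1..k}. (\<gamma> j)\<^sup>2) * (\<Sum>j\<in>{1..k}. (Q j)\<^sup>2) \<le> real k * (\<Sum>j\<in>{1..k}. (Q j)\<^sup>2)"
        by (intro mult_right_mono sum_nonneg) auto
      finally show ?thesis .
    qed
    have cs3: "V\<^sup>2 \<le> real N * (\<Sum>i<N. (e i) ^ 4)"
    proof -
      have "V\<^sup>2 = (\<Sum>i<N. 1 * (e i)\<^sup>2)\<^sup>2" unfolding V_def by simp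
      also have "\<dots> \<le> (\<Sum>i<N. 1\<^sup>2) * (\<Sum>i<N. ((e i)\<^sup>2)\<^sup>2)" by (rule Cauchy_Schwarz_ineq_sum)
      also have "\<dots> = real N * (\<Sum>i<N. (e i) ^ 4)" by (simp add: power_mult[symmetric])
      finally show ?thesis .
    qed
    have c2nn: "c2 \<ge> 0" unfolding c2_def by simp
    have "?L = (2 * ?c * (\<Sum>i<N. b i * e i) + c2 * V)\<^sup>2"
      unfolding S1 ND[symmetric] by (simp add: power_mult_distrib)
    also have "\<dots> \<le> 2 * (2 * ?c * (\<Sum>i<N. b i * e i))\<^sup>2 + 2 * (c2 * V)\<^sup>2" by (rule sq_sum_le)
    also have "(2 * ?c * (\<Sum>i<N. b i * e i))\<^sup>2 = 4 * c2 * (\<Sum>i<N. b i * e i)\<^sup>2"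
      using c2 c2nn by (simp add: power_mult_distrib)
    also have "(\<Sum>i<N. b i * e i)\<^sup>2 \<le> 2 * (\<Sum>i<N. a i * e i)\<^sup>2 + 2 * (?c * (\<Sum>j\<in>{1..k}. \<gamma> j * Q j))\<^sup>2"
      unfolding be by (rule sq_sum_le)
    also have "(?c * (\<Sum>j\<in>{1..k}. \<gamma> j * Q j))\<^sup>2 = c2 * (\<Sum>j\<in>{1..k}. \<gamma> j * Q j)\<^sup>2"
      using c2 c2nn by (simp add: power_mult_distrib)
    finally have "?L \<le> 2 * (4 * c2 * (2 * (\<Sum>i<N. a i * e i)\<^sup>2 + 2 * (c2 * (\<Sum>j\<in>{1..k}. \<gamma> j * Q j)\<^sup>2))) + 2 * (c2 * V)\<^sup>2"
      using c2nn by (simp add: mult_left_mono)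
    also have "\<dots> \<le> 2 * (4 * c2 * (2 * ((\<Sum>i<N. (a i)\<^sup>2) * V) + 2 * (c2 * (real k * (\<Sum>j\<in>{1..k}. (Q j)\<^sup>2))))) + 2 * (c2\<^sup>2 * (real N * (\<Sum>i<N. (e i) ^ 4)))"
      using cs1 cs2 cs3 c2nn
      by (intro add_mono mult_left_mono order_refl) (auto simp: power_mult_distrib intro: mult_left_mono)
    also have "\<dots> = ?G" unfolding a_def e_def Q_def V_def by (simp add: algebra_simps power2_eq_square)
    finally show ?thesis .
  qed
qed


context prob_space
begin

lemma normal_moments:
  assumes D: "distributed M lborel X (\<lambda>t. ennreal (std_normal_density t))"
  shows "integrable M (\<lambda>\<omega>. X \<omega> ^ n)"
    and "expectation (\<lambda>\<omega>. X \<omega>) = 0"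
    and "expectation (\<lambda>\<omega>. (X \<omega>)\<^sup>2) = 1"
    and "expectation (\<lambda>\<omega>. X \<omega> ^ 4) = 3"
proof -
  show "integrable M (\<lambda>\<omega>. X \<omega> ^ n)"
    using distributed_integrable[OF D, of "\<lambda>x. x ^ n"] integrable_std_normal_moment[of n]
    by (simp add: normal_density_nonneg)
  have "expectation (\<lambda>\<omega>. X \<omega> ^ (2 * 0 + 1)) = 0"
    using distributed_integral[OF D, of "\<lambda>x. x ^ (2 * 0 + 1)"] integral_std_normal_moment_odd[of 0]
    by (simp add: normal_density_nonneg)
  then show "expectation (\<lambda>\<omega>. X \<omega>) = 0" by simp
  have "expectation (\<lambda>\<omega>. X \<omega> ^ (2 * 1)) = fact (2 * 1) / (2 ^ 1 * fact 1)"
    using distributed_integral[OF D, of "\<lambda>x. x ^ (2 * 1)"] integral_std_normal_moment_even[of 1]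
    by (simp add: normal_density_nonneg)
  then show "expectation (\<lambda>\<omega>. (X \<omega>)\<^sup>2) = 1" by simp
  have "expectation (\<lambda>\<omega>. X \<omega> ^ (2 * 2)) = fact (2 * 2) / (2 ^ 2 * fact 2)"
    using distributed_integral[OF D, of "\<lambda>x. x ^ (2 * 2)"] integral_std_normal_moment_even[of 2]
    by (simp add: normal_density_nonneg)
  then show "expectation (\<lambda>\<omega>. X \<omega> ^ 4) = 3" by (simp add: fact_numeral)
qed

lemma indep_prod_pow:
  fixes Y :: "'i \<Rightarrow> 'a \<Rightarrow> real"
  assumes ind: "indep_vars (\<lambda>_. borel) Y UNIV"
    and int: "\<And>p n. p \<in> J \<Longrightarrow> integrable M (\<lambda>\<omega>. Y p \<omega> ^ n)"
    and J: "finite J"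
  shows "expectation (\<lambda>\<omega>. \<Prod>p\<in>J. Y p \<omega> ^ e p) = (\<Prod>p\<in>J. expectation (\<lambda>\<omega>. Y p \<omega> ^ e p))"
    and "integrable M (\<lambda>\<omega>. \<Prod>p\<in>J. Y p \<omega> ^ e p)"
proof -
  have ind2: "indep_vars (\<lambda>_. borel) (\<lambda>p \<omega>. Y p \<omega> ^ e p) J"
    by (rule indep_vars_compose2[OF indep_vars_subset[OF ind]]) auto
  show "expectation (\<lambda>\<omega>. \<Prod>p\<in>J. Y p \<omega> ^ e p) = (\<Prod>p\<in>J. expectation (\<lambda>\<omega>. Y p \<omega> ^ e p))"
    by (rule indep_vars_lebesgue_integral[OF J ind2 int]) auto
  show "integrable M (\<lambda>\<omega>. \<Prod>p\<in>J. Y p \<omega> ^ e p)"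
    by (rule indep_vars_integrable[OF J ind2 int]) auto
qed


lemma four_prod:
  fixes Y :: "(nat \<times> nat) + nat \<Rightarrow> 'a \<Rightarrow> real"
  assumes ind: "indep_vars (\<lambda>_. borel) Y UNIV"
    and D: "\<And>k i. distributed M lborel (Y (Inl (k, i))) (\<lambda>t. ennreal (std_normal_density t))"
    and jm: "j \<noteq> m"
  shows "integrable M (\<lambda>\<omega>. Y (Inl (j, i)) \<omega> * Y (Inl (m, i)) \<omega> * (Y (Inl (j, i')) \<omega> * Y (Inl (m, i')) \<omega>))"
    and "expectation (\<lambda>\<omega>. Y (Inl (j, i)) \<omega> * Y (Inl (m, i)) \<omega> * (Y (Inl (j, i')) \<omega> * Y (Inl (m, i')) \<omega>))
         = (if i = i' then 1 else 0)"
proof -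
  have int: "\<And>p n. p \<in> range Inl \<Longrightarrow> integrable M (\<lambda>\<omega>. Y p \<omega> ^ n)"
    using normal_moments(1)[OF D] by auto
  have "integrable M (\<lambda>\<omega>. Y (Inl (j, i)) \<omega> * Y (Inl (m, i)) \<omega> * (Y (Inl (j, i')) \<omega> * Y (Inl (m, i')) \<omega>))
     \<and> expectation (\<lambda>\<omega>. Y (Inl (j, i)) \<omega> * Y (Inl (m, i)) \<omega> * (Y (Inl (j, i')) \<omega> * Y (Inl (m, i')) \<omega>))
         = (if i = i' then 1 else 0)"
  proof (cases "i = i'")
    case True
    let ?J = "{Inl (j, i), Inl (m, i)} :: ((nat \<times> nat) + nat) set"
    have eq: "(\<lambda>\<omega>. Y (Inl (j, i)) \<omega> * Y (Inl (m, i)) \<omega> * (Y (Inl (j, i')) \<omega> * Y (Inl (m, i')) \<omega>))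
        = (\<lambda>\<omega>. \<Prod>p\<in>?J. Y p \<omega> ^ 2)"
      using True jm by (auto simp: power2_eq_square mult_ac)
    have intJ: "\<And>p n. p \<in> ?J \<Longrightarrow> integrable M (\<lambda>\<omega>. Y p \<omega> ^ n)" using int by auto
    have "expectation (\<lambda>\<omega>. \<Prod>p\<in>?J. Y p \<omega> ^ 2) = (\<Prod>p\<in>?J. expectation (\<lambda>\<omega>. Y p \<omega> ^ 2))"
      by (rule indep_prod_pow(1)[OF ind intJ]) auto
    also have "\<dots> = 1" using jm normal_moments(3)[OF D] by simp
    moreover have "integrable M (\<lambda>\<omega>. \<Prod>p\<in>?J. Y p \<omega> ^ 2)"
      by (rule indep_prod_pow(2)[OF ind intJ]) auto
    ultimately show ?thesis using True unfolding eq by auto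
  next
    case False
    let ?J = "{Inl (j, i), Inl (m, i), Inl (j, i'), Inl (m, i')} :: ((nat \<times> nat) + nat) set"
    have eq: "(\<lambda>\<omega>. Y (Inl (j, i)) \<omega> * Y (Inl (m, i)) \<omega> * (Y (Inl (j, i')) \<omega> * Y (Inl (m, i')) \<omega>))
        = (\<lambda>\<omega>. \<Prod>p\<in>?J. Y p \<omega> ^ 1)"
      using False jm by (auto simp: mult_ac)
    have intJ: "\<And>p n. p \<in> ?J \<Longrightarrow> integrable M (\<lambda>\<omega>. Y p \<omega> ^ n)" using int by auto
    have "expectation (\<lambda>\<omega>. \<Prod>p\<in>?J. Y p \<omega> ^ 1) = (\<Prod>p\<in>?J. expectation (\<lambda>\<omega>. Y p \<omega> ^ 1))"
      by (rule indep_prod_pow(1)[OF ind intJ]) auto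
    also have "\<dots> = 0" using jm False normal_moments(2)[OF D] by simp
    moreover have "integrable M (\<lambda>\<omega>. \<Prod>p\<in>?J. Y p \<omega> ^ 1)"
      by (rule indep_prod_pow(2)[OF ind intJ]) auto
    ultimately show ?thesis using False unfolding eq by auto
  qed
  then show "integrable M (\<lambda>\<omega>. Y (Inl (j, i)) \<omega> * Y (Inl (m, i)) \<omega> * (Y (Inl (j, i')) \<omega> * Y (Inl (m, i')) \<omega>))"
    and "expectation (\<lambda>\<omega>. Y (Inl (j, i)) \<omega> * Y (Inl (m, i)) \<omega> * (Y (Inl (j, i')) \<omega> * Y (Inl (m, i')) \<omega>))
         = (if i = i' then 1 else 0)" by auto
qed

lemma EQ2:
  fixes Y :: "(nat \<times> nat) + nat \<Rightarrow> 'a \<Rightarrow> real"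
  assumes ind: "indep_vars (\<lambda>_. borel) Y UNIV"
    and D: "\<And>k i. distributed M lborel (Y (Inl (k, i))) (\<lambda>t. ennreal (std_normal_density t))"
    and jm: "j \<noteq> m"
  shows "integrable M (\<lambda>\<omega>. (\<Sum>i<N. Y (Inl (j, i)) \<omega> * Y (Inl (m, i)) \<omega>)\<^sup>2)"
    and "expectation (\<lambda>\<omega>. (\<Sum>i<N. Y (Inl (j, i)) \<omega> * Y (Inl (m, i)) \<omega>)\<^sup>2) = real N"
proof -
  have sq: "(\<lambda>\<omega>. (\<Sum>i<N. Y (Inl (j, i)) \<omega> * Y (Inl (m, i)) \<omega>)\<^sup>2) =
     (\<lambda>\<omega>. \<Sum>i<N. \<Sum>i'<N. Y (Inl (j, i)) \<omega> * Y (Inl (m, i)) \<omega> * (Y (Inl (j, i')) \<omega> * Y (Inl (m, i')) \<omega>))"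
    by (simp add: power2_eq_square sum_product)
  show "integrable M (\<lambda>\<omega>. (\<Sum>i<N. Y (Inl (j, i)) \<omega> * Y (Inl (m, i)) \<omega>)\<^sup>2)"
    unfolding sq
  proof (intro Bochner_Integration.integrable_sum)
    fix i i' show "integrable M (\<lambda>\<omega>. Y (Inl (j, i)) \<omega> * Y (Inl (m, i)) \<omega> * (Y (Inl (j, i')) \<omega> * Y (Inl (m, i')) \<omega>))"
      by (rule four_prod(1)[OF ind D jm])
  qed
  have "expectation (\<lambda>\<omega>. (\<Sum>i<N. Y (Inl (j, i)) \<omega> * Y (Inl (m, i)) \<omega>)\<^sup>2)
      = (\<Sum>i<N. \<Sum>i'<N. expectation (\<lambda>\<omega>. Y (Inl (j, i)) \<omega> * Y (Inl (m, i)) \<omega> * (Y (Inl (j, i')) \<omega> * Y (Inl (m, i')) \<omega>)))"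
    unfolding sq by (simp add: Bochner_Integration.integral_sum Bochner_Integration.integrable_sum four_prod(1)[OF ind D jm])
  also have "\<dots> = (\<Sum>i<N. \<Sum>i'<N. (if i = i' then 1 else 0))"
    using four_prod(2)[OF ind D jm] by simp
  also have "\<dots> = real N" by simp
  finally show "expectation (\<lambda>\<omega>. (\<Sum>i<N. Y (Inl (j, i)) \<omega> * Y (Inl (m, i)) \<omega>)\<^sup>2) = real N" .
qed

end


context prob_space
begin

lemma EG:
  fixes Y :: "(nat \<times> nat) + nat \<Rightarrow> 'a \<Rightarrow> real" and c2 A :: real and N k :: nat
  assumes ind: "indep_vars (\<lambda>_. borel) Y UNIV"
    and D: "\<And>k i. distributed M lborel (Y (Inl (k, i))) (\<lambda>t. ennreal (std_normal_density t))"
  defines "G \<equiv> \<lambda>\<omega>. 16 * c2 * A * (\<Sum>i<N. (Y (Inl (Suc k, i)) \<omega>)\<^sup>2)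
       + 16 * c2\<^sup>2 * real k * (\<Sum>j\<in>{1..k}. (\<Sum>i<N. Y (Inl (j, i)) \<omega> * Y (Inl (Suc k, i)) \<omega>)\<^sup>2)
       + 2 * c2\<^sup>2 * real N * (\<Sum>i<N. (Y (Inl (Suc k, i)) \<omega>) ^ 4)"
  shows "integrable M G"
    and "expectation G = 16 * c2 * A * real N + 16 * c2\<^sup>2 * real k * (real k * real N) + 2 * c2\<^sup>2 * real N * (3 * real N)"
proof -
  note nm = normal_moments[OF D]
  have iQ: "integrable M (\<lambda>\<omega>. (\<Sum>i<N. Y (Inl (j, i)) \<omega> * Y (Inl (Suc k, i)) \<omega>)\<^sup>2)" if "j \<in> {1..k}" for j
    by (rule EQ2(1)[OF ind D]) (use that in auto)
  have eQ: "expectation (\<lambda>\<omega>. (\<Sum>i<N. Y (Inl (j, i)) \<omega> * Y (Inl (Suc k, i)) \<omega>)\<^sup>2) = real N" if "j \<in> {1..k}" for j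
    by (rule EQ2(2)[OF ind D]) (use that in auto)
  have i2: "integrable M (\<lambda>\<omega>. (Y (Inl (Suc k, i)) \<omega>)\<^sup>2)" for i by (rule nm(1))
  have i4: "integrable M (\<lambda>\<omega>. (Y (Inl (Suc k, i)) \<omega>) ^ 4)" for i by (rule nm(1))
  have I1: "integrable M (\<lambda>\<omega>. \<Sum>i<N. (Y (Inl (Suc k, i)) \<omega>)\<^sup>2)"
    by (intro Bochner_Integration.integrable_sum i2)
  have I2: "integrable M (\<lambda>\<omega>. \<Sum>j\<in>{1..k}. (\<Sum>i<N. Y (Inl (j, i)) \<omega> * Y (Inl (Suc k, i)) \<omega>)\<^sup>2)"
    by (intro Bochner_Integration.integrable_sum iQ)
  have I3: "integrable M (\<lambda>\<omega>. \<Sum>i<N. (Y (Inl (Suc k, i)) \<omega>) ^ 4)"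
    by (intro Bochner_Integration.integrable_sum i4)
  show "integrable M G" unfolding G_def
    by (intro Bochner_Integration.integrable_add integrable_mult_right I1 I2 I3)
  have E1: "expectation (\<lambda>\<omega>. \<Sum>i<N. (Y (Inl (Suc k, i)) \<omega>)\<^sup>2) = real N"
    using nm(3) by (simp add: Bochner_Integration.integral_sum i2)
  have E2: "expectation (\<lambda>\<omega>. \<Sum>j\<in>{1..k}. (\<Sum>i<N. Y (Inl (j, i)) \<omega> * Y (Inl (Suc k, i)) \<omega>)\<^sup>2) = real k * real N"
    using eQ by (simp add: Bochner_Integration.integral_sum iQ)
  have E3: "expectation (\<lambda>\<omega>. \<Sum>i<N. (Y (Inl (Suc k, i)) \<omega>) ^ 4) = 3 * real N"
    using nm(4) by (simp add: Bochner_Integration.integral_sum i4)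
  show "expectation G = 16 * c2 * A * real N + 16 * c2\<^sup>2 * real k * (real k * real N) + 2 * c2\<^sup>2 * real N * (3 * real N)"
    unfolding G_def
    using I2[simplified] E2[simplified]
    by (simp add: Bochner_Integration.integral_add integrable_mult_right I1 I3 E1 E3)
qed

end


lemma floor_facts:
  assumes N: "N > 0" and v: "0 \<le> v"
  shows "real (nat \<lfloor>real N * v\<rfloor>) \<le> real N * v" "real N * v < real (nat \<lfloor>real N * v\<rfloor>) + 1"
proof -
  have nn: "0 \<le> real N * v" using v by simp
  then have "0 \<le> \<lfloor>real N * v\<rfloor>" by simp
  then have eq: "real (nat \<lfloor>real N * v\<rfloor>) = of_int \<lfloor>real N * v\<rfloor>" by simp
  show "real (nat \<lfloor>real N * v\<rfloor>) \<le> real N * v" unfolding eq by (rule of_int_floor_le)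
  show "real N * v < real (nat \<lfloor>real N * v\<rfloor>) + 1" unfolding eq by linarith
qed

lemma inner_bound:
  fixes f :: "real \<Rightarrow> real" and Sk :: "nat \<Rightarrow> real"
  assumes S0: "\<And>k. Sk k \<ge> 0" and N: "N > 0" and T: "T > 0" and C: "C \<ge> 0"
    and hol: "\<And>x y. 0 \<le> x \<Longrightarrow> 0 \<le> y \<Longrightarrow> (f x - f y)\<^sup>2 \<le> C * \<bar>x - y\<bar>"
  shows "(\<integral>\<^sup>+ v. ennreal ((f (Sbar N Sk v) - f (Sinterp N Sk v))\<^sup>2) * indicator {0..T} v \<partial>lborel)
    \<le> ennreal (\<Sum>k\<le>nat \<lfloor>real N * T\<rfloor>. C * \<bar>Sk (Suc k) - Sk k\<bar> / real N)"
proof -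
  let ?K = "nat \<lfloor>real N * T\<rfloor>"
  let ?I = "\<lambda>k::nat. {real k / real N..<(real k + 1) / real N}"
  have pw: "ennreal ((f (Sbar N Sk v) - f (Sinterp N Sk v))\<^sup>2) * indicator {0..T} v
      \<le> (\<Sum>k\<le>?K. ennreal (C * \<bar>Sk (Suc k) - Sk k\<bar>) * indicator (?I k) v)" for v
  proof (cases "v \<in> {0..T}")
    case False then show ?thesis by simp
  next
    case True
    then have v0: "0 \<le> v" and vT: "v \<le> T" by auto
    define k0 where "k0 = nat \<lfloor>real N * v\<rfloor>"
    note fl = floor_facts[OF N v0, folded k0_def]
    have "real N * v \<le> real N * T" using vT by (simp add: mult_left_mono)
    then have k0K: "k0 \<le> ?K" unfolding k0_def by (intro nat_mono floor_mono)
    have Nr: "real N > 0" using N by simp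
    have vI: "v \<in> ?I k0"
      using fl Nr by (auto simp: field_simps)
    define \<theta> where "\<theta> = real N * v - real k0"
    have th: "0 \<le> \<theta>" "\<theta> \<le> 1" using fl by (auto simp: \<theta>_def)
    have sb: "Sbar N Sk v = Sk k0" unfolding Sbar_def k0_def ..
    have si: "Sinterp N Sk v = \<theta> * Sk (Suc k0) + (1 - \<theta>) * Sk k0"
      unfolding Sinterp_def Let_def k0_def[symmetric] \<theta>_def by simp
    have sinn: "0 \<le> Sinterp N Sk v" unfolding si using th S0[of k0] S0[of "Suc k0"] by simp
    have "(f (Sbar N Sk v) - f (Sinterp N Sk v))\<^sup>2 \<le> C * \<bar>Sbar N Sk v - Sinterp N Sk v\<bar>"
      by (rule hol) (use sinn S0 sb in auto)
    also have "\<bar>Sbar N Sk v - Sinterp N Sk v\<bar> = \<theta> * \<bar>Sk (Suc k0) - Sk k0\<bar>"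
    proof -
      have "Sk k0 - (\<theta> * Sk (Suc k0) + (1 - \<theta>) * Sk k0) = \<theta> * (Sk k0 - Sk (Suc k0))" by (simp add: algebra_simps)
      then show ?thesis unfolding sb si using th by (simp add: abs_mult abs_minus_commute)
    qed
    also have "C * (\<theta> * \<bar>Sk (Suc k0) - Sk k0\<bar>) \<le> C * \<bar>Sk (Suc k0) - Sk k0\<bar>"
      using th C by (simp add: mult_left_le_one_le mult_left_mono)
    finally have b: "(f (Sbar N Sk v) - f (Sinterp N Sk v))\<^sup>2 \<le> C * \<bar>Sk (Suc k0) - Sk k0\<bar>" .
    have "ennreal ((f (Sbar N Sk v) - f (Sinterp N Sk v))\<^sup>2) * indicator {0..T} v
        \<le> ennreal (C * \<bar>Sk (Suc k0) - Sk k0\<bar>) * indicator (?I k0) v"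
      using True vI b by (simp add: ennreal_leI)
    also have "\<dots> \<le> (\<Sum>k\<le>?K. ennreal (C * \<bar>Sk (Suc k) - Sk k\<bar>) * indicator (?I k) v)"
      by (rule member_le_sum[of k0 "{..?K}" "\<lambda>k. ennreal (C * \<bar>Sk (Suc k) - Sk k\<bar>) * indicator (?I k) v"])
         (use k0K in auto)
    finally show ?thesis .
  qed
  have "(\<integral>\<^sup>+ v. ennreal ((f (Sbar N Sk v) - f (Sinterp N Sk v))\<^sup>2) * indicator {0..T} v \<partial>lborel)
      \<le> (\<integral>\<^sup>+ v. (\<Sum>k\<le>?K. ennreal (C * \<bar>Sk (Suc k) - Sk k\<bar>) * indicator (?I k) v) \<partial>lborel)"
    by (rule nn_integral_mono) (rule pw)
  also have "\<dots> = (\<Sum>k\<le>?K. \<integral>\<^sup>+ v. ennreal (C * \<bar>Sk (Suc k) - Sk k\<bar>) * indicator (?I k) v \<partial>lborel)"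
    by (rule nn_integral_sum) auto
  also have "\<dots> = (\<Sum>k\<le>?K. ennreal (C * \<bar>Sk (Suc k) - Sk k\<bar>) * emeasure lborel (?I k))"
    by (intro sum.cong refl nn_integral_cmult_indicator) auto
  also have "\<dots> = (\<Sum>k\<le>?K. ennreal (C * \<bar>Sk (Suc k) - Sk k\<bar> / real N))"
  proof (rule sum.cong[OF refl])
    fix k
    have "emeasure lborel (?I k) = ennreal ((real k + 1) / real N - real k / real N)"
      using N by (subst emeasure_lborel_Ico) (auto simp: divide_right_mono)
    also have "(real k + 1) / real N - real k / real N = 1 / real N" by (simp add: diff_divide_distrib[symmetric])
    finally show "ennreal (C * \<bar>Sk (Suc k) - Sk k\<bar>) * emeasure lborel (?I k) = ennreal (C * \<bar>Sk (Suc k) - Sk k\<bar> / real N)"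
      using C by (simp add: ennreal_mult[symmetric])
  qed
  also have "\<dots> = ennreal (\<Sum>k\<le>?K. C * \<bar>Sk (Suc k) - Sk k\<bar> / real N)"
    using C by (intro sum_ennreal) auto
  finally show ?thesis .
qed


lemma abs_le_eps: assumes "e > 0" shows "\<bar>d::real\<bar> \<le> e / 2 + d\<^sup>2 / (2 * e)"
proof -
  have "0 \<le> (\<bar>d\<bar> - e)\<^sup>2" by simp
  then have "2 * e * \<bar>d\<bar> \<le> e\<^sup>2 + d\<^sup>2" by (simp add: power2_eq_square algebra_simps)
  then show ?thesis using assms by (simp add: field_simps power2_eq_square)
qed

lemma EG_arith:
  fixes l B T A0 :: real and N k :: nat
  assumes N: "N \<ge> 1" and A0: "0 \<le> A0" "A0 \<le> real N * B" and k: "real k \<le> real N * T"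
    and T: "T > 0"
  shows "16 * (2 * l\<^sup>2 / real N) * A0 * real N + 16 * (2 * l\<^sup>2 / real N)\<^sup>2 * real k * (real k * real N)
      + 2 * (2 * l\<^sup>2 / real N)\<^sup>2 * real N * (3 * real N)
    \<le> (32 * l\<^sup>2 * B + 64 * l ^ 4 * T\<^sup>2 + 24 * l ^ 4) * real N"
proof -
  have Np: "real N > 0" using N by simp
  have N1: "real N \<ge> 1" using N by simp
  have t1: "16 * (2 * l\<^sup>2 / real N) * A0 * real N = 32 * l\<^sup>2 * A0" using Np by simp
  have l4: "l ^ 4 = l * (l * (l * l))" by (simp add: numeral_eq_Suc)
  have t2: "16 * (2 * l\<^sup>2 / real N)\<^sup>2 * real k * (real k * real N) = 64 * l ^ 4 * (real k)\<^sup>2 / real N"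
    using Np unfolding l4 by (simp add: field_simps power2_eq_square)
  have t3: "2 * (2 * l\<^sup>2 / real N)\<^sup>2 * real N * (3 * real N) = 24 * l ^ 4"
    using Np unfolding l4 by (simp add: field_simps power2_eq_square)
  have "32 * l\<^sup>2 * A0 \<le> 32 * l\<^sup>2 * (real N * B)" using A0 by (intro mult_left_mono) auto
  then have b1: "32 * l\<^sup>2 * A0 \<le> 32 * l\<^sup>2 * B * real N" by (simp add: mult_ac)
  have "(real k)\<^sup>2 \<le> (real N * T)\<^sup>2" by (rule power_mono[OF k]) simp
  then have "(real k)\<^sup>2 / real N \<le> (real N * T)\<^sup>2 / real N" using Np by (simp add: divide_right_mono)
  also have "(real N * T)\<^sup>2 / real N = T\<^sup>2 * real N" using Np by (simp add: power2_eq_square)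
  finally have "64 * l ^ 4 * ((real k)\<^sup>2 / real N) \<le> 64 * l ^ 4 * (T\<^sup>2 * real N)"
    by (intro mult_left_mono) auto
  then have b2: "64 * l ^ 4 * (real k)\<^sup>2 / real N \<le> 64 * l ^ 4 * T\<^sup>2 * real N"
    by (simp add: mult.assoc)
  have b3: "24 * l ^ 4 \<le> 24 * l ^ 4 * real N" using N1 by (simp add: mult_le_cancel_left1)
  show ?thesis unfolding t1 t2 t3 using b1 b2 b3 by (simp add: algebra_simps)
qed


theorem lemma7p3:
  fixes M :: "'a measure"
    and xi :: "nat \<Rightarrow> nat \<Rightarrow> nat \<Rightarrow> 'a \<Rightarrow> real"
    and U :: "nat \<Rightarrow> nat \<Rightarrow> 'a \<Rightarrow> real"
    and lam :: "nat \<Rightarrow> real" and Psi :: "(nat \<Rightarrow> real) \<Rightarrow> real"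
    and kappa s l T :: real and x0 :: "nat \<Rightarrow> real"
  assumes A: "assumptions_A kappa lam s Psi"
    and l: "l > 0"
    and x0: "in_Hs_cap s lam x0"
    and T: "T > 0"
    and M: "prob_space M"
    and xi_dist: "\<And>N k i. distributed M lborel (xi N k i) (\<lambda>t. ennreal (std_normal_density t))"
    and U_dist: "\<And>N k. distributed M lborel (U N k) (\<lambda>t. indicator {0..1} t)"
    and indep: "\<And>N. prob_space.indep_vars M (\<lambda>_. borel)
          (\<lambda>j. case j of Inl (k, i) \<Rightarrow> xi N k i | Inr k \<Rightarrow> U N k) UNIV"
  shows "(\<lambda>N. \<integral>\<^sup>+ \<omega>. (\<integral>\<^sup>+ v. ennreal
            ((A_l l (Sbar N (\<lambda>k. S_N lam N (rwm_chain lam Psi l N x0 (\<lambda>k i. xi N k i \<omega>) (\<lambda>k. U N k \<omega>) k)) v)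
            - A_l l (Sinterp N (\<lambda>k. S_N lam N (rwm_chain lam Psi l N x0 (\<lambda>k i. xi N k i \<omega>) (\<lambda>k. U N k \<omega>) k)) v))\<^sup>2)
            * indicator {0..T} v \<partial>lborel) \<partial>M)
         \<longlonglongrightarrow> 0"
proof -
  interpret prob_space M by (rule M)
  have lam: "\<And>i. lam i > 0" using A by (simp add: assumptions_A_def)
  obtain CA where CA0: "CA \<ge> 0" and CA: "\<And>x y. 0 \<le> x \<Longrightarrow> 0 \<le> y \<Longrightarrow> (A_l l x - A_l l y)\<^sup>2 \<le> CA * \<bar>x - y\<bar>"
    using A_holder[OF l] by blast
  have conv: "convergent (\<lambda>N. (1 / real N) * (\<Sum>i<N. (x0 i)\<^sup>2 / (lam i)\<^sup>2))"
    using x0 by (simp add: in_Hs_cap_def)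
  obtain B where B0: "B > 0" and B: "\<And>N. norm ((1 / real N) * (\<Sum>i<N. (x0 i)\<^sup>2 / (lam i)\<^sup>2)) \<le> B"
    using convergent_imp_Bseq[OF conv] by (auto elim!: BseqE)
  define C1 where "C1 = 32 * l\<^sup>2 * B + 64 * l ^ 4 * T\<^sup>2 + 24 * l ^ 4"
  have C1: "C1 \<ge> 0" using B0 by (simp add: C1_def)
  define b where "b N = (T + 1) * CA * (1 + C1) / (2 * sqrt (real N))" for N :: nat
  define F where "F = (\<lambda>N \<omega>. \<integral>\<^sup>+ v. ennreal
            ((A_l l (Sbar N (\<lambda>k. S_N lam N (rwm_chain lam Psi l N x0 (\<lambda>k i. xi N k i \<omega>) (\<lambda>k. U N k \<omega>) k)) v)
            - A_l l (Sinterp N (\<lambda>k. S_N lam N (rwm_chain lam Psi l N x0 (\<lambda>k i. xi N k i \<omega>) (\<lambda>k. U N k \<omega>) k)) v))\<^sup>2)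
            * indicator {0..T} v \<partial>lborel)"
  have key: "(\<integral>\<^sup>+ \<omega>. F N \<omega> \<partial>M) \<le> ennreal (b N)" if N1: "N \<ge> 1" for N
  proof -
    have Npos: "N > 0" using N1 by simp
    have Nr: "real N > 0" using Npos by simp
    define K where "K = nat \<lfloor>real N * T\<rfloor>"
    define \<epsilon> where "\<epsilon> = 1 / sqrt (real N)"
    have \<epsilon>: "\<epsilon> > 0" using Nr by (simp add: \<epsilon>_def)
    define c2 where "c2 = 2 * l\<^sup>2 / real N"
    define A0 where "A0 = (\<Sum>i<N. (x0 i / lam i)\<^sup>2)"
    define Gk where "Gk k \<omega> = 16 * c2 * A0 * (\<Sum>i<N. (xi N (Suc k) i \<omega>)\<^sup>2)
       + 16 * c2\<^sup>2 * real k * (\<Sum>j\<in>{1..k}. (\<Sum>i<N. xi N j i \<omega> * xi N (Suc k) i \<omega>)\<^sup>2)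
       + 2 * c2\<^sup>2 * real N * (\<Sum>i<N. (xi N (Suc k) i \<omega>) ^ 4)" for k \<omega>
    define \<alpha> where "\<alpha> = CA / real N * (\<epsilon> / 2)"
    define \<beta> where "\<beta> = CA / real N / (2 * \<epsilon> * (real N)\<^sup>2)"
    have \<alpha>0: "\<alpha> \<ge> 0" and \<beta>0: "\<beta> \<ge> 0" using CA0 Nr \<epsilon> by (auto simp: \<alpha>_def \<beta>_def)
    define H where "H \<omega> = (\<Sum>k\<le>K. \<alpha> + \<beta> * Gk k \<omega>)" for \<omega>
    have c20: "c2 \<ge> 0" by (simp add: c2_def)
    have A00: "A0 \<ge> 0" by (simp add: A0_def sum_nonneg)
    have Gk0: "Gk k \<omega> \<ge> 0" for k \<omega>
      unfolding Gk_def using c20 A00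
      by (intro add_nonneg_nonneg mult_nonneg_nonneg sum_nonneg) (auto simp: zero_le_even_power)
    have H0: "H \<omega> \<ge> 0" for \<omega>
      unfolding H_def using \<alpha>0 \<beta>0 Gk0 by (intro sum_nonneg add_nonneg_nonneg mult_nonneg_nonneg) auto
    have pw: "F N \<omega> \<le> ennreal (H \<omega>)" for \<omega>
    proof -
      let ?Sk = "\<lambda>k. S_N lam N (rwm_chain lam Psi l N x0 (\<lambda>k i. xi N k i \<omega>) (\<lambda>k. U N k \<omega>) k)"
      have Sk0: "?Sk k \<ge> 0" for k unfolding S_N_def by (intro mult_nonneg_nonneg sum_nonneg) auto
      have "F N \<omega> \<le> ennreal (\<Sum>k\<le>K. CA * \<bar>?Sk (Suc k) - ?Sk k\<bar> / real N)"
        unfolding F_def K_def by (rule inner_bound[OF Sk0 Npos T CA0 CA])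
      also have "\<dots> \<le> ennreal (H \<omega>)"
      proof (rule ennreal_leI, unfold H_def, rule sum_mono)
        fix k assume "k \<in> {..K}"
        let ?d = "?Sk (Suc k) - ?Sk k"
        have db: "(real N)\<^sup>2 * ?d\<^sup>2 \<le> Gk k \<omega>"
          unfolding Gk_def A0_def by (rule delta_bound[OF lam Npos c2_def])
        have "?d\<^sup>2 \<le> Gk k \<omega> / (real N)\<^sup>2" using db Nr by (simp add: field_simps)
        then have "\<bar>?d\<bar> \<le> \<epsilon> / 2 + (Gk k \<omega> / (real N)\<^sup>2) / (2 * \<epsilon>)"
          using abs_le_eps[OF \<epsilon>, of ?d] \<epsilon> by (smt (verit) divide_right_mono)
        then have "CA / real N * \<bar>?d\<bar> \<le> CA / real N * (\<epsilon> / 2 + (Gk k \<omega> / (real N)\<^sup>2) / (2 * \<epsilon>))"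
          using CA0 Nr by (intro mult_left_mono) auto
        also have "\<dots> = \<alpha> + \<beta> * Gk k \<omega>" unfolding \<alpha>_def \<beta>_def using \<epsilon> Nr by (simp add: field_simps)
        finally show "CA * \<bar>?d\<bar> / real N \<le> \<alpha> + \<beta> * Gk k \<omega>" by simp
      qed
      finally show ?thesis .
    qed
    define Y where "Y = (\<lambda>j. case j of Inl (k, i) \<Rightarrow> xi N k i | Inr k \<Rightarrow> U N k)"
    have Yeq: "\<And>k i. Y (Inl (k, i)) = xi N k i" by (simp add: Y_def)
    have indY: "indep_vars (\<lambda>_. borel) Y UNIV" unfolding Y_def by (rule indep)
    have DY: "\<And>k i. distributed M lborel (Y (Inl (k, i))) (\<lambda>t. ennreal (std_normal_density t))"
      unfolding Yeq by (rule xi_dist)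
    have Gint: "integrable M (Gk k)" for k
      unfolding Gk_def[abs_def] by (rule EG(1)[OF indY DY, unfolded Yeq])
    have GE: "expectation (Gk k) = 16 * c2 * A0 * real N + 16 * c2\<^sup>2 * real k * (real k * real N) + 2 * c2\<^sup>2 * real N * (3 * real N)" for k
      unfolding Gk_def[abs_def] by (rule EG(2)[OF indY DY, unfolded Yeq])
    have Hint: "integrable M H"
      unfolding H_def by (intro Bochner_Integration.integrable_sum Bochner_Integration.integrable_add integrable_const integrable_mult_right Gint)
    have EH: "expectation H = (\<Sum>k\<le>K. \<alpha> + \<beta> * expectation (Gk k))"
      unfolding H_def by (simp add: Bochner_Integration.integral_sum Bochner_Integration.integral_add Gint prob_space)
    have A0B: "A0 \<le> real N * B"
    proof -
      have "A0 = real N * ((1 / real N) * (\<Sum>i<N. (x0 i)\<^sup>2 / (lam i)\<^sup>2))"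
        unfolding A0_def using Nr by (simp add: power_divide)
      also have "\<dots> \<le> real N * B"
      proof (intro mult_left_mono)
        show "(1 / real N) * (\<Sum>i<N. (x0 i)\<^sup>2 / (lam i)\<^sup>2) \<le> B"
          using B[of N] abs_ge_self[of "(1 / real N) * (\<Sum>i<N. (x0 i)\<^sup>2 / (lam i)\<^sup>2)"]
          by (simp only: real_norm_def)
      qed simp
      finally show ?thesis .
    qed
    have EGb: "expectation (Gk k) \<le> C1 * real N" if "k \<in> {..K}" for k
    proof -
      have "real k \<le> real N * T"
      proof -
        have "k \<le> K" using that by simp
        then have "real k \<le> real K" by simp
        also have "real K \<le> real N * T" unfolding K_def using floor_facts(1)[OF Npos, of T] T by simp
        finally show ?thesis .
      qed
      then show ?thesis unfolding GE c2_def C1_def using EG_arith[OF N1 A00[unfolded c2_def] A0B _ T] by simp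
    qed
    have "expectation H \<le> (\<Sum>k\<le>K. \<alpha> + \<beta> * (C1 * real N))"
      unfolding EH using EGb \<beta>0 by (intro sum_mono add_left_mono mult_left_mono) auto
    also have "\<dots> = (real K + 1) * (\<alpha> + \<beta> * (C1 * real N))" by simp
    also have "\<alpha> + \<beta> * (C1 * real N) = CA / real N * ((1 + C1) / (2 * sqrt (real N)))"
    proof -
      have s: "sqrt (real N) * sqrt (real N) = real N" using Nr by simp
      show ?thesis unfolding \<alpha>_def \<beta>_def \<epsilon>_def using Nr
        by (simp add: field_simps power2_eq_square s)
    qed
    also have "(real K + 1) * (CA / real N * ((1 + C1) / (2 * sqrt (real N)))) \<le> b N"
    proof -
      have "real K \<le> real N * T" unfolding K_def using floor_facts(1)[OF Npos, of T] T by simp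
      then have "real K + 1 \<le> real N * (T + 1)" using N1 by (simp add: algebra_simps)
      then have "(real K + 1) / real N \<le> T + 1" using Nr by (simp add: field_simps)
      moreover have "0 \<le> CA * ((1 + C1) / (2 * sqrt (real N)))" using CA0 C1 by simp
      ultimately have "(real K + 1) / real N * (CA * ((1 + C1) / (2 * sqrt (real N)))) \<le> (T + 1) * (CA * ((1 + C1) / (2 * sqrt (real N))))"
        by (rule mult_right_mono)
      then show ?thesis unfolding b_def by (simp add: field_simps)
    qed
    finally have EHb: "expectation H \<le> b N" .
    have "(\<integral>\<^sup>+ \<omega>. F N \<omega> \<partial>M) \<le> (\<integral>\<^sup>+ \<omega>. ennreal (H \<omega>) \<partial>M)"
      by (rule nn_integral_mono) (rule pw)
    also have "\<dots> = ennreal (expectation H)"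
      by (rule nn_integral_eq_integral[OF Hint]) (simp add: H0)
    also have "\<dots> \<le> ennreal (b N)" using EHb by (rule ennreal_leI)
    finally show ?thesis .
  qed
  have blim: "(\<lambda>N. ennreal (b N)) \<longlonglongrightarrow> 0"
  proof -
    have "(\<lambda>N. b N) \<longlonglongrightarrow> 0"
      unfolding b_def by real_asymp
    then show ?thesis using tendsto_ennrealI[of b 0] by simp
  qed
  have "(\<lambda>N. \<integral>\<^sup>+ \<omega>. F N \<omega> \<partial>M) \<longlonglongrightarrow> 0"
  proof (rule tendsto_sandwich[OF _ _ tendsto_const blim])
    show "\<forall>\<^sub>F N in sequentially. 0 \<le> (\<integral>\<^sup>+ \<omega>. F N \<omega> \<partial>M)" by simp
    show "\<forall>\<^sub>F N in sequentially. (\<integral>\<^sup>+ \<omega>. F N \<omega> \<partial>M) \<le> ennreal (b N)"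
      using eventually_ge_at_top[of 1] by eventually_elim (rule key)
  qed
  then show ?thesis unfolding F_def .
qed


end
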